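(* Let $\mathbb{F}$ be an algebraically closed field with $\mathrm{char}\,\mathbb{F}=2$. Let $\mathcal{A}$ be a (not necessarily unital) subalgebra of $\mathbf{O}$ of dimension $d\le3$ such that for some $\mathbb{F}$-basis $a_1,\ldots,a_d$ of some subalgebra in the ${\rm G}_2$-orbit of $\mathcal{A}$, the orbit ${\rm G}_2(a_1,\ldots,a_d)$ is Zariski closed in $\mathbf{O}^d$. Then there exists $g\in{\rm G}_2$ such that $g\mathcal{A}$ is the $\mathbb{F}$-span of one of the following sets: for $d=1$: $\{1_{\mathbf{O}}\}$ or $\{e_1\}$; for $d=2$: $\{e_1,e_2\}$. (In particular, $d\neq3$.)
   Context: The split octonion algebra $\mathbf{O}$ is the 8-dimensional $\mathbb{F}$-vector space of formal matrices $a=\begin{pmatrix}\alpha&\mathbf{u}\\ \mathbf{v}&\beta\end{pmatrix}$ with $\alpha,\beta\in\mathbb{F}$, $\mathbf{u},\mathbf{v}\in\mathbb{F}^3$, with multiplication $\begin{pmatrix}\alpha&\mathbf{u}\\ \mathbf{v}&\beta\end{pmatrix}\begin{pmatrix}\alpha'&\mathbf{u}'\\ \mathbf{v}'&\beta'\end{pmatrix}=\begin{pmatrix}\alpha\alpha'+\mathbf{u}\cdot\mathbf{v}'&\alpha\mathbf{u}'+\beta'\mathbf{u}-\mathbf{v}\times\mathbf{v}'\\ \alpha'\mathbf{v}+\beta\mathbf{v}'+\mathbf{u}\times\mathbf{u}'&\beta\beta'+\mathbf{v}\cdot\mathbf{u}'\end{pmatrix}$ (dot product and cross product on $\mathbb{F}^3$).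 $e_1$ has $\alpha=1$ and all else $0$, $e_2$ has $\beta=1$ and all else $0$, $1_{\mathbf{O}}=e_1+e_2$. ${\rm G}_2=\mathrm{Aut}(\mathbf{O})$ acts on $\mathbf{O}^d$ diagonally and on the set of subalgebras by $\mathcal{A}\mapsto g\mathcal{A}$. In the paper's terminology, the ${\rm G}_2$-orbit (equivalence class) of $\mathcal{A}$ is called closed when the stated condition holds. *)

theory Defs
  imports "HOL-Computational_Algebra.Polynomial"
begin

definition alg_closed :: "'a::field itself \<Rightarrow> bool" where
  "alg_closed _ \<longleftrightarrow> (\<forall>p :: 'a poly. degree p \<ge> 1 \<longrightarrow> (\<exists>x. poly p x = 0))"

type_synonym 'a vec3 = "'a \<times> 'a \<times> 'a"

fun vadd :: "'a::field vec3 \<Rightarrow> 'a vec3 \<Rightarrow> 'a vec3" where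
  "vadd (x1, x2, x3) (y1, y2, y3) = (x1 + y1, x2 + y2, x3 + y3)"

fun vscale :: "'a::field \<Rightarrow> 'a vec3 \<Rightarrow> 'a vec3" where
  "vscale c (x1, x2, x3) = (c * x1, c * x2, c * x3)"

fun dot3 :: "'a::field vec3 \<Rightarrow> 'a vec3 \<Rightarrow> 'a" where
  "dot3 (x1, x2, x3) (y1, y2, y3) = x1 * y1 + x2 * y2 + x3 * y3"

fun cross3 :: "'a::field vec3 \<Rightarrow> 'a vec3 \<Rightarrow> 'a vec3" where
  "cross3 (x1, x2, x3) (y1, y2, y3) =
     (x2 * y3 - x3 * y2, x3 * y1 - x1 * y3, x1 * y2 - x2 * y1)"

section \<open>Split octonions: Zorn vector matrices (alpha, u, v, beta)\<close>

datatype 'a oct = Oct 'a "'a vec3" "'a vec3" 'a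

fun oadd :: "'a::field oct \<Rightarrow> 'a oct \<Rightarrow> 'a oct" where
  "oadd (Oct a u v b) (Oct a' u' v' b') = Oct (a + a') (vadd u u') (vadd v v') (b + b')"

fun oscale :: "'a::field \<Rightarrow> 'a oct \<Rightarrow> 'a oct" where
  "oscale c (Oct a u v b) = Oct (c * a) (vscale c u) (vscale c v) (c * b)"

definition ozero :: "'a::field oct" where
  "ozero = Oct 0 (0, 0, 0) (0, 0, 0) 0"

fun omult :: "'a::field oct \<Rightarrow> 'a oct \<Rightarrow> 'a oct" where
  "omult (Oct a u v b) (Oct a' u' v' b') =
     Oct (a * a' + dot3 u v')
         (vadd (vadd (vscale a u') (vscale b' u)) (vscale (-1) (cross3 v v')))
         (vadd (vadd (vscale a' v) (vscale b v')) (cross3 u u'))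
         (b * b' + dot3 v u')"

definition oe1 :: "'a::field oct" where "oe1 = Oct 1 (0, 0, 0) (0, 0, 0) 0"
definition oe2 :: "'a::field oct" where "oe2 = Oct 0 (0, 0, 0) (0, 0, 0) 1"
definition oone :: "'a::field oct" where "oone = Oct 1 (0, 0, 0) (0, 0, 0) 1"

fun ocoord :: "'a::field oct \<Rightarrow> nat \<Rightarrow> 'a" where
  "ocoord (Oct a (u1, u2, u3) (v1, v2, v3) b) k =
     (if k = 0 then a else if k = 1 then u1 else if k = 2 then u2 else if k = 3 then u3
      else if k = 4 then v1 else if k = 5 then v2 else if k = 6 then v3
      else if k = 7 then b else 0)"

definition lin_comb :: "'a::field list \<Rightarrow> 'a oct list \<Rightarrow> 'a oct" where
  "lin_comb cs xs = foldr oadd (map2 oscale cs xs) ozero"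

definition span_list :: "'a::field oct list \<Rightarrow> 'a oct set" where
  "span_list xs = {y. \<exists>cs. length cs = length xs \<and> y = lin_comb cs xs}"

definition lin_indep :: "'a::field oct list \<Rightarrow> bool" where
  "lin_indep xs \<longleftrightarrow>
     (\<forall>cs. length cs = length xs \<and> lin_comb cs xs = ozero \<longrightarrow> (\<forall>c\<in>set cs. c = 0))"

definition is_basis :: "'a::field oct list \<Rightarrow> 'a oct set \<Rightarrow> bool" where
  "is_basis xs A \<longleftrightarrow> lin_indep xs \<and> span_list xs = A"

definition subalgebra :: "'a::field oct set \<Rightarrow> bool" where
  "subalgebra A \<longleftrightarrow> ozero \<in> A \<and> (\<forall>x\<in>A. \<forall>y\<in>A. oadd x y \<in> A)
     \<and> (\<forall>c. \<forall>x\<in>A. oscale c x \<in> A) \<and> (\<forall>x\<in>A. \<forall>y\<in>A. omult x y \<in> A)"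

definition has_dim :: "'a::field oct set \<Rightarrow> nat \<Rightarrow> bool" where
  "has_dim A d \<longleftrightarrow> (\<exists>xs. length xs = d \<and> is_basis xs A)"

definition G2 :: "('a::field oct \<Rightarrow> 'a oct) set" where
  "G2 = {g. bij g \<and> (\<forall>x y. g (oadd x y) = oadd (g x) (g y))
           \<and> (\<forall>c x. g (oscale c x) = oscale c (g x))
           \<and> (\<forall>x y. g (omult x y) = omult (g x) (g y))}"

datatype 'a mpoly_expr = PConst 'a | PVar nat
  | PAdd "'a mpoly_expr" "'a mpoly_expr" | PMul "'a mpoly_expr" "'a mpoly_expr"

fun peval :: "'a::field mpoly_expr \<Rightarrow> (nat \<Rightarrow> 'a) \<Rightarrow> 'a" where
  "peval (PConst c) x = c"
| "peval (PVar i) x = x i"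
| "peval (PAdd p q) x = peval p x + peval q x"
| "peval (PMul p q) x = peval p x * peval q x"

definition tuple_coords :: "'a::field oct list \<Rightarrow> nat \<Rightarrow> 'a" where
  "tuple_coords xs k = (if k < 8 * length xs then ocoord (xs ! (k div 8)) (k mod 8) else 0)"

definition zariski_closed :: "nat \<Rightarrow> 'a::field oct list set \<Rightarrow> bool" where
  "zariski_closed d S \<longleftrightarrow>
     (\<exists>P :: 'a mpoly_expr set.
        S = {xs. length xs = d \<and> (\<forall>p\<in>P. peval p (tuple_coords xs) = 0)})"

definition G2_orbit_tuple :: "'a::field oct list \<Rightarrow> 'a oct list set" where
  "G2_orbit_tuple xs = {map g xs | g. g \<in> G2}"

end

theory Submission
  imports Defs
begin


section \<open>Group structure on octonions\<close>

lemma oct8_cases: obtains a u1 u2 u3 v1 v2 v3 b where "x = Oct a (u1,u2,u3) (v1,v2,v3) b"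
  by (metis oct.exhaust prod_cases3)

instantiation oct :: (field) ab_group_add
begin
definition zero_oct_def: "0 = (ozero :: 'a oct)"
definition plus_oct_def: "x + y = oadd (x::'a oct) y"
definition uminus_oct_def: "- x = oscale (-1) (x::'a oct)"
definition minus_oct_def: "x - y = oadd (x::'a oct) (oscale (-1) y)"
instance
  apply standard
  unfolding zero_oct_def plus_oct_def uminus_oct_def minus_oct_def ozero_def
  subgoal for a b c by (rule oct8_cases[of a], rule oct8_cases[of b], rule oct8_cases[of c], simp add: algebra_simps)
  subgoal for a b by (rule oct8_cases[of a], rule oct8_cases[of b], simp add: algebra_simps)
  subgoal for a by (rule oct8_cases[of a], simp add: algebra_simps)
  subgoal for a by (rule oct8_cases[of a], simp add: algebra_simps)
  subgoal by simp
  done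
end

lemma oct_plus[simp]: "Oct a u v b + Oct a' u' v' b' = Oct (a + a') (vadd u u') (vadd v v') (b + b')"
  by (simp add: plus_oct_def)
lemma oct_zero: "(0::'a::field oct) = Oct 0 (0,0,0) (0,0,0) 0"
  by (simp add: zero_oct_def ozero_def)
lemma ozero_is_0: "ozero = 0" by (simp add: zero_oct_def)
lemma oadd_is_plus: "oadd x y = x + y" by (simp add: plus_oct_def)

lemma oscale_add: "oscale a (x + y) = oscale a x + oscale a (y::'a::field oct)"
  by (rule oct8_cases[of x], rule oct8_cases[of y], simp add: algebra_simps)
lemma oscale_addl: "oscale (a + b) x = oscale a x + oscale b (x::'a::field oct)"
  by (rule oct8_cases[of x], simp add: algebra_simps)
lemma oscale_oscale[simp]: "oscale a (oscale b x) = oscale (a * b) (x::'a::field oct)"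
  by (rule oct8_cases[of x], simp add: algebra_simps)
lemma oscale_one[simp]: "oscale 1 x = (x::'a::field oct)"
  by (rule oct8_cases[of x], simp add: algebra_simps)
lemma oscale_zero[simp]: "oscale 0 x = (0::'a::field oct)"
  by (rule oct8_cases[of x], simp add: oct_zero)
lemma oscale_0[simp]: "oscale a 0 = (0::'a::field oct)"
  by (simp add: oct_zero)

lemma oct_vs: "vector_space (oscale :: 'a::field \<Rightarrow> 'a oct \<Rightarrow> 'a oct)"
  unfolding vector_space_def by (simp add: oscale_add oscale_addl)

lemma oct_mod: "module (oscale :: 'a::field \<Rightarrow> 'a oct \<Rightarrow> 'a oct)"
  using oct_vs module_iff_vector_space by blast

lemma lin_comb_Nil[simp]: "lin_comb [] xs = 0" "lin_comb cs [] = 0"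
  by (simp_all add: lin_comb_def zero_oct_def)
lemma lin_comb_Cons[simp]: "lin_comb (c#cs) (x#xs) = oscale c x + lin_comb cs xs"
  by (simp add: lin_comb_def plus_oct_def)

lemma span_list_sub: "span_list xs \<subseteq> module.span oscale (set xs)"
proof -
  have "lin_comb cs xs \<in> module.span oscale (set xs)" for cs
  proof (induction xs arbitrary: cs)
    case Nil then show ?case
      using module.span_zero[OF oct_vs[unfolded module_iff_vector_space[symmetric]]] by simp
  next
    case (Cons x xs)
    have M: "module (oscale :: 'a \<Rightarrow> 'a oct \<Rightarrow> 'a oct)" using oct_vs module_iff_vector_space by blast
    show ?case
    proof (cases cs)
      case Nil then show ?thesis using module.span_zero[OF M] by simp
    next
      case (Cons c cs')
      have "lin_comb cs' xs \<in> module.span oscale (set (x#xs))"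
        using Cons.IH module.span_mono[OF M, of "set xs" "set (x#xs)"] by auto
      moreover have "oscale c x \<in> module.span oscale (set (x#xs))"
        by (rule module.span_scale[OF M], rule module.span_base[OF M], simp)
      ultimately show ?thesis using Cons module.span_add[OF M] by auto
    qed
  qed
  then show ?thesis unfolding span_list_def by auto
qed

lemma lin_comb_sum: "length cs = length xs \<Longrightarrow> lin_comb cs xs = (\<Sum>k<length xs. oscale (cs!k) (xs!k))"
proof (induction xs arbitrary: cs)
  case Nil then show ?case by simp
next
  case (Cons x xs)
  then obtain c cs' where cs: "cs = c # cs'" by (cases cs) auto
  with Cons show ?case by (simp del: sum.lessThan_Suc add: sum.lessThan_Suc_shift)
qed

lemma lin_comb_map: "lin_comb (map u xs) xs = sum_list (map (\<lambda>v. oscale (u v) v) xs)"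
  by (induction xs) auto

lemma lin_indep_distinct:
  assumes "lin_indep (xs :: 'a::field oct list)" shows "distinct xs"
proof (rule ccontr)
  assume "\<not> distinct xs"
  then obtain i j where ij: "i < j" "j < length xs" "xs!i = xs!j"
    by (metis distinct_conv_nth linorder_neqE_nat)
  define cs where "cs = map (\<lambda>k. if k = i then (1::'a) else if k = j then -1 else 0) [0..<length xs]"
  have len: "length cs = length xs" by (simp add: cs_def)
  have "lin_comb cs xs = (\<Sum>k<length xs. oscale (cs!k) (xs!k))" by (rule lin_comb_sum[OF len])
  also have "\<dots> = (\<Sum>k\<in>{i,j}. oscale (cs!k) (xs!k))"
    by (rule sum.mono_neutral_right) (use ij in \<open>auto simp: cs_def\<close>)
  also have "\<dots> = xs!i + - (xs!j)"
    using ij by (simp add: cs_def uminus_oct_def)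
  also have "\<dots> = 0" using ij by simp
  finally have "\<forall>c\<in>set cs. c = 0" using assms len unfolding lin_indep_def ozero_is_0 by blast
  moreover have "cs!i \<in> set cs" using ij len by simp
  ultimately show False using ij by (simp add: cs_def)
qed

lemma lin_indep_indep:
  assumes "lin_indep (xs :: 'a::field oct list)" shows "\<not> module.dependent oscale (set xs)"
proof
  assume "module.dependent oscale (set xs)"
  then obtain u v where uv: "v \<in> set xs" "u v \<noteq> 0" "(\<Sum>v\<in>set xs. oscale (u v) v) = 0"
    using module.dependent_finite[OF oct_mod, of "set xs"] by auto
  have lc: "lin_comb (map u xs) xs = 0"
    using uv(3) lin_indep_distinct[OF assms] by (simp add: lin_comb_map sum.distinct_set_conv_list)
  have "length (map u xs) = length xs" by simp
  with lc have "\<forall>c\<in>set (map u xs). c = 0" using assms unfolding lin_indep_def ozero_is_0 by blast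
  then show False using uv by auto
qed

lemma bound:
  assumes "lin_indep (zs :: 'a::field oct list)" "set zs \<subseteq> span_list bs"
  shows "length zs \<le> length bs"
proof -
  have "set zs \<subseteq> module.span oscale (set bs)" using assms(2) span_list_sub by blast
  then have "card (set zs) \<le> card (set bs)"
    using vector_space.independent_span_bound[OF oct_vs, of "set bs" "set zs"] lin_indep_indep[OF assms(1)] by auto
  also have "\<dots> \<le> length bs" by (rule card_length)
  finally show ?thesis using distinct_card[OF lin_indep_distinct[OF assms(1)]] by simp
qed



section \<open>Automorphisms\<close>

lemma G2_add: "g \<in> G2 \<Longrightarrow> g (x + y) = g x + g y"
  unfolding G2_def plus_oct_def by auto
lemma G2_scale: "g \<in> G2 \<Longrightarrow> g (oscale c x) = oscale c (g x)"
  unfolding G2_def by auto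
lemma G2_mult: "g \<in> G2 \<Longrightarrow> g (omult x y) = omult (g x) (g y)"
  unfolding G2_def by auto
lemma G2_bij: "g \<in> G2 \<Longrightarrow> bij g"
  unfolding G2_def by auto
lemma G2_inj: "g \<in> G2 \<Longrightarrow> inj g"
  using G2_bij bij_is_inj by blast
lemma G2_zero: "g \<in> G2 \<Longrightarrow> g 0 = 0"
  by (metis G2_scale oscale_zero)
lemma G2_minus: "g \<in> G2 \<Longrightarrow> g (x - y) = g x - g y"
  by (metis G2_add add_diff_cancel_right' diff_add_cancel)

lemma omult_oone_left[simp]: "omult oone x = x"
  by (rule oct8_cases[of x]) (simp add: oone_def)
lemma omult_oone_right[simp]: "omult x oone = x"
  by (rule oct8_cases[of x]) (simp add: oone_def)

lemma G2_one: assumes "g \<in> G2" shows "g oone = oone"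
proof -
  obtain x where "g x = oone" using G2_bij[OF assms] by (metis bij_def surjD)
  then have "omult (g oone) oone = oone" using G2_mult[OF assms, of oone x] by simp
  then show ?thesis by simp
qed

lemma G2_lin_comb: "g \<in> G2 \<Longrightarrow> g (lin_comb cs xs) = lin_comb cs (map g xs)"
proof (induction xs arbitrary: cs)
  case Nil then show ?case by (simp add: G2_zero)
next
  case (Cons x xs) then show ?case by (cases cs) (auto simp: G2_zero G2_add G2_scale)
qed

lemma G2_span: "g \<in> G2 \<Longrightarrow> g ` span_list xs = span_list (map g xs)"
  unfolding span_list_def using G2_lin_comb by fastforce

lemma G2_indep: assumes "g \<in> G2" "lin_indep xs" shows "lin_indep (map g xs)"
  unfolding lin_indep_def
proof (intro allI impI)
  fix cs assume "length cs = length (map g xs) \<and> lin_comb cs (map g xs) = ozero"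
  then have "length cs = length xs" "g (lin_comb cs xs) = g 0"
    using G2_lin_comb[OF assms(1)] G2_zero[OF assms(1)] by (auto simp: ozero_is_0)
  then have "lin_comb cs xs = ozero" using G2_inj[OF assms(1)] by (auto simp: inj_def ozero_is_0)
  then show "\<forall>c\<in>set cs. c = 0" using assms(2) \<open>length cs = length xs\<close> unfolding lin_indep_def by blast
qed

lemma G2_id: "id \<in> G2" unfolding G2_def by auto

lemma G2_comp: "g \<in> G2 \<Longrightarrow> h \<in> G2 \<Longrightarrow> g \<circ> h \<in> G2"
  unfolding G2_def by (auto intro: bij_comp)

lemma G2_inv: assumes "g \<in> G2" shows "inv g \<in> G2"
proof -
  have b: "bij g" using G2_bij[OF assms] .
  have e: "inv g (g x) = x" for x using b by (simp add: bij_is_inj)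
  have f: "g (inv g x) = x" for x using b by (simp add: bij_is_surj surj_f_inv_f)
  have a: "inv g (x + y) = inv g x + inv g y" for x y
  proof -
    have "g (inv g x + inv g y) = x + y" by (simp add: G2_add[OF assms] f)
    then show ?thesis by (metis e)
  qed
  have s: "inv g (oscale c x) = oscale c (inv g x)" for c x
  proof -
    have "g (oscale c (inv g x)) = oscale c x" by (simp add: G2_scale[OF assms] f)
    then show ?thesis by (metis e)
  qed
  have m: "inv g (omult x y) = omult (inv g x) (inv g y)" for x y
  proof -
    have "g (omult (inv g x) (inv g y)) = omult x y" by (simp add: G2_mult[OF assms] f)
    then show ?thesis by (metis e)
  qed
  show ?thesis unfolding G2_def using a s m bij_imp_bij_inv[OF b] by (auto simp: plus_oct_def)
qed

lemma orbit_map: assumes "g \<in> G2" shows "G2_orbit_tuple (map g xs) = G2_orbit_tuple xs"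
  unfolding G2_orbit_tuple_def
proof (intro set_eqI iffI)
  fix ys assume "ys \<in> {map h (map g xs) |h. h \<in> G2}"
  then obtain h where "h \<in> G2" "ys = map (h \<circ> g) xs" by auto
  then show "ys \<in> {map h xs |h. h \<in> G2}" using G2_comp assms by blast
next
  fix ys assume "ys \<in> {map h xs |h. h \<in> G2}"
  then obtain h where h: "h \<in> G2" "ys = map h xs" by auto
  have "map h xs = map (h \<circ> inv g) (map g xs)"
    using G2_bij[OF assms] by (simp add: bij_is_inj)
  then show "ys \<in> {map h (map g xs) |h. h \<in> G2}" using h G2_comp G2_inv assms by fastforce
qed

lemma subalg_image: assumes "g \<in> G2" "subalgebra A" shows "subalgebra (g ` A)"
proof -
  have z: "0 \<in> A" and ad: "\<And>x y. x \<in> A \<Longrightarrow> y \<in> A \<Longrightarrow> x + y \<in> A"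
    and sc: "\<And>c x. x \<in> A \<Longrightarrow> oscale c x \<in> A"
    and mu: "\<And>x y. x \<in> A \<Longrightarrow> y \<in> A \<Longrightarrow> omult x y \<in> A"
    using assms(2) unfolding subalgebra_def ozero_is_0 oadd_is_plus by auto
  show ?thesis unfolding subalgebra_def ozero_is_0 oadd_is_plus
  proof (intro conjI ballI allI)
    show "0 \<in> g ` A" using z G2_zero[OF assms(1)] by (metis imageI)
  next
    fix x y assume "x \<in> g ` A" "y \<in> g ` A"
    then obtain a b where "a \<in> A" "b \<in> A" "x = g a" "y = g b" by auto
    then show "x + y \<in> g ` A" "omult x y \<in> g ` A"
      using ad mu G2_add[OF assms(1)] G2_mult[OF assms(1)] by (metis imageI)+
  next
    fix c x assume "x \<in> g ` A"
    then obtain a where "a \<in> A" "x = g a" by auto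
    then show "oscale c x \<in> g ` A" using sc G2_scale[OF assms(1)] by (metis imageI)
  qed
qed



fun Xw :: "'a::field vec3 \<Rightarrow> 'a oct \<Rightarrow> 'a oct" where
 "Xw w (Oct a u v b) = Oct (a - dot3 w v) (vadd u (vscale (a - b - dot3 w v) w)) (vadd v (cross3 w u)) (b + dot3 w v)"

fun sig :: "'a::field oct \<Rightarrow> 'a oct" where
 "sig (Oct a u v b) = Oct b (vscale (-1) v) (vscale (-1) u) a"

fun mv :: "'a::field vec3 \<Rightarrow> 'a vec3 \<Rightarrow> 'a vec3 \<Rightarrow> 'a vec3 \<Rightarrow> 'a vec3" where
 "mv r1 r2 r3 u = (dot3 r1 u, dot3 r2 u, dot3 r3 u)"

fun SM :: "'a::field vec3 \<Rightarrow> 'a vec3 \<Rightarrow> 'a vec3 \<Rightarrow> 'a oct \<Rightarrow> 'a oct" where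
 "SM r1 r2 r3 (Oct a u v b) = Oct a (mv r1 r2 r3 u) (mv (cross3 r2 r3) (cross3 r3 r1) (cross3 r1 r2) v) b"

lemma Xw_mult: "Xw w (omult x y) = omult (Xw w x) (Xw w y)"
  by (cases w, rule oct8_cases[of x], rule oct8_cases[of y]) (simp add: algebra_simps)

lemma Xw_inv: "Xw (vscale (-1) w) (Xw w x) = x"
  by (cases w, rule oct8_cases[of x]) (simp add: algebra_simps)

lemma mv_add: "mv r1 r2 r3 (vadd u u') = vadd (mv r1 r2 r3 u) (mv r1 r2 r3 u')"
  by (cases r1, cases r2, cases r3, cases u, cases u') (simp add: algebra_simps)
lemma mv_scale: "mv r1 r2 r3 (vscale c u) = vscale c (mv r1 r2 r3 u)"
  by (cases r1, cases r2, cases r3, cases u) (simp add: algebra_simps)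
lemma L1: "dot3 (mv r1 r2 r3 u) (mv (cross3 r2 r3) (cross3 r3 r1) (cross3 r1 r2) v) = dot3 r1 (cross3 r2 r3) * dot3 u v"
  by (cases r1, cases r2, cases r3, cases u, cases v) (simp add: algebra_simps)
lemma L1': "dot3 (mv (cross3 r2 r3) (cross3 r3 r1) (cross3 r1 r2) v) (mv r1 r2 r3 u) = dot3 r1 (cross3 r2 r3) * dot3 v u"
  by (cases r1, cases r2, cases r3, cases u, cases v) (simp add: algebra_simps)
lemma L2: "cross3 (mv r1 r2 r3 u) (mv r1 r2 r3 u') = mv (cross3 r2 r3) (cross3 r3 r1) (cross3 r1 r2) (cross3 u u')"
  by (cases r1, cases r2, cases r3, cases u, cases u') (simp add: algebra_simps)
lemma L3: "cross3 (mv (cross3 r2 r3) (cross3 r3 r1) (cross3 r1 r2) v) (mv (cross3 r2 r3) (cross3 r3 r1) (cross3 r1 r2) v') = vscale (dot3 r1 (cross3 r2 r3)) (mv r1 r2 r3 (cross3 v v'))"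
  by (cases r1, cases r2, cases r3, cases v, cases v') (simp add: algebra_simps)

lemma L4: "mv (cross3 (cross3 r3 r1) (cross3 r1 r2)) (cross3 (cross3 r1 r2) (cross3 r2 r3)) (cross3 (cross3 r2 r3) (cross3 r3 r1)) w = vscale (dot3 r1 (cross3 r2 r3)) (mv r1 r2 r3 w)"
  by (cases r1, cases r2, cases r3, cases w) (simp add: algebra_simps)

lemma vscale_one[simp]: "vscale 1 u = u" by (cases u) simp

lemma SM_mult:
  assumes "dot3 r1 (cross3 r2 r3) = 1"
  shows "SM r1 r2 r3 (omult x y) = omult (SM r1 r2 r3 x) (SM r1 r2 r3 y)"
  by (cases x, cases y) (simp del: mv.simps add: mv_add mv_scale L1 L1' L2 L4 assms)

fun adjA :: "'a::field vec3 \<Rightarrow> 'a vec3 \<Rightarrow> 'a vec3 \<Rightarrow> 'a vec3" where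
  "adjA (a1,a2,a3) (b1,b2,b3) (c1,c2,c3) = (b2*c3 - b3*c2, c2*a3 - c3*a2, a2*b3 - a3*b2)"
fun adjB :: "'a::field vec3 \<Rightarrow> 'a vec3 \<Rightarrow> 'a vec3 \<Rightarrow> 'a vec3" where
  "adjB (a1,a2,a3) (b1,b2,b3) (c1,c2,c3) = (b3*c1 - b1*c3, c3*a1 - c1*a3, a3*b1 - a1*b3)"
fun adjC :: "'a::field vec3 \<Rightarrow> 'a vec3 \<Rightarrow> 'a vec3 \<Rightarrow> 'a vec3" where
  "adjC (a1,a2,a3) (b1,b2,b3) (c1,c2,c3) = (b1*c2 - b2*c1, c1*a2 - c2*a1, a1*b2 - a2*b1)"

lemma adj_u: "mv (adjA r1 r2 r3) (adjB r1 r2 r3) (adjC r1 r2 r3) (mv r1 r2 r3 u) = vscale (dot3 r1 (cross3 r2 r3)) u"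
  by (cases r1, cases r2, cases r3, cases u) (simp add: algebra_simps)
lemma adj_u': "mv r1 r2 r3 (mv (adjA r1 r2 r3) (adjB r1 r2 r3) (adjC r1 r2 r3) u) = vscale (dot3 r1 (cross3 r2 r3)) u"
  by (cases r1, cases r2, cases r3, cases u) (simp add: algebra_simps)

lemma adj_v: "mv (cross3 (adjB r1 r2 r3) (adjC r1 r2 r3)) (cross3 (adjC r1 r2 r3) (adjA r1 r2 r3)) (cross3 (adjA r1 r2 r3) (adjB r1 r2 r3))
   (mv (cross3 r2 r3) (cross3 r3 r1) (cross3 r1 r2) v) = vscale (dot3 r1 (cross3 r2 r3) * dot3 r1 (cross3 r2 r3)) v"
  by (cases r1, cases r2, cases r3, cases v) (simp add: algebra_simps)
lemma adj_v': "mv (cross3 r2 r3) (cross3 r3 r1) (cross3 r1 r2) (mv (cross3 (adjB r1 r2 r3) (adjC r1 r2 r3)) (cross3 (adjC r1 r2 r3) (adjA r1 r2 r3)) (cross3 (adjA r1 r2 r3) (adjB r1 r2 r3))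
   v) = vscale (dot3 r1 (cross3 r2 r3) * dot3 r1 (cross3 r2 r3)) v"
  by (cases r1, cases r2, cases r3, cases v) (simp add: algebra_simps)

lemma bij_from_inv: "(\<And>x. f (g x) = x) \<Longrightarrow> (\<And>x. g (f x) = x) \<Longrightarrow> bij f"
  by (metis bijI' )

lemma SM_G2: assumes "dot3 r1 (cross3 r2 r3) = 1" shows "SM r1 r2 r3 \<in> G2"
  unfolding G2_def
proof (intro CollectI conjI allI)
  let ?s = "SM (adjA r1 r2 r3) (adjB r1 r2 r3) (adjC r1 r2 r3)"
  show "bij (SM r1 r2 r3)"
  proof (rule bij_from_inv[of _ ?s])
    fix x show "SM r1 r2 r3 (?s x) = x"
      by (cases x) (simp del: mv.simps adjA.simps adjB.simps adjC.simps add: adj_u' adj_v' assms)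
  next
    fix x show "?s (SM r1 r2 r3 x) = x"
      by (cases x) (simp del: mv.simps adjA.simps adjB.simps adjC.simps add: adj_u adj_v assms)
  qed
next
  fix x y show "SM r1 r2 r3 (oadd x y) = oadd (SM r1 r2 r3 x) (SM r1 r2 r3 y)"
    by (cases x, cases y) (simp del: mv.simps add: mv_add)
next
  fix c x show "SM r1 r2 r3 (oscale c x) = oscale c (SM r1 r2 r3 x)"
    by (cases x) (simp del: mv.simps add: mv_scale)
next
  fix x y show "SM r1 r2 r3 (omult x y) = omult (SM r1 r2 r3 x) (SM r1 r2 r3 y)"
    by (rule SM_mult[OF assms])
qed

lemma Xw_G2: "Xw w \<in> G2"
  unfolding G2_def
proof (intro CollectI conjI allI)
  show "bij (Xw w)"
    by (rule bij_from_inv[of _ "Xw (vscale (-1) w)"]) (metis Xw_inv vscale_one mult_minus1 vscale.simps prod_cases3 minus_minus Xw_inv)+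
next
  fix x y show "Xw w (oadd x y) = oadd (Xw w x) (Xw w y)"
    by (cases w, rule oct8_cases[of x], rule oct8_cases[of y]) (simp add: algebra_simps)
next
  fix c x show "Xw w (oscale c x) = oscale c (Xw w x)"
    by (cases w, rule oct8_cases[of x]) (simp add: algebra_simps)
next
  fix x y show "Xw w (omult x y) = omult (Xw w x) (Xw w y)" by (rule Xw_mult)
qed

lemma sig_G2: "sig \<in> G2"
  unfolding G2_def
proof (intro CollectI conjI allI)
  show "bij sig"
    apply (rule bij_from_inv[of _ sig])
    subgoal for x by (rule oct8_cases[of x]) simp
    subgoal for x by (rule oct8_cases[of x]) simp
    done
next
  fix x y show "sig (oadd x y) = oadd (sig x) (sig y)"
    by (rule oct8_cases[of x], rule oct8_cases[of y]) (simp add: algebra_simps)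
next
  fix c x show "sig (oscale c x) = oscale c (sig x)"
    by (rule oct8_cases[of x]) (simp add: algebra_simps)
next
  fix x y show "sig (omult x y) = omult (sig x) (sig y)"
    by (rule oct8_cases[of x], rule oct8_cases[of y]) (simp add: algebra_simps)
qed



definition ntidem :: "'a::field oct \<Rightarrow> bool" where
  "ntidem e \<longleftrightarrow> omult e e = e \<and> e \<noteq> 0 \<and> e \<noteq> oone"

lemma ntidem_G2: assumes "g \<in> G2" "ntidem e" shows "ntidem (g e)"
  using assms unfolding ntidem_def
  by (metis G2_mult G2_zero G2_one G2_inj injD)

lemma idem_cond:
  assumes "ntidem (Oct a u v b)"
  shows "a + b = 1 \<and> a * b = dot3 u v"
proof -
  obtain u1 u2 u3 v1 v2 v3 where uv: "u = (u1,u2,u3)" "v = (v1,v2,v3)" by (metis prod_cases3)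
  have e: "a*a + dot3 u v = a" "b*b + dot3 v u = b" "vadd (vadd (vscale a u) (vscale b u)) (vscale (-1) (cross3 v v)) = u"
      "vadd (vadd (vscale a v) (vscale b v)) (cross3 u u) = v"
    using assms unfolding ntidem_def by auto
  show ?thesis
  proof (cases "a + b = 1")
    case True
    have b: "b = 1 - a" using True by (simp add: algebra_simps)
    have d: "dot3 u v = a - a*a" using e(1) by (simp add: algebra_simps)
    have "a * b = a - a*a" unfolding b by (simp add: algebra_simps)
    with d True show ?thesis by simp
  next
    case False
    then have "a + b - 1 \<noteq> 0" by simp
    have "(a + b - 1) * u1 = 0" "(a + b - 1) * u2 = 0" "(a + b - 1) * u3 = 0"
         "(a + b - 1) * v1 = 0" "(a + b - 1) * v2 = 0" "(a + b - 1) * v3 = 0"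
      using e(3,4) unfolding uv by (simp_all add: algebra_simps)
    then have z: "u1 = 0" "u2 = 0" "u3 = 0" "v1 = 0" "v2 = 0" "v3 = 0" using \<open>a + b - 1 \<noteq> 0\<close> by simp_all
    then have "a * a = a" "b * b = b" using e(1,2) uv by auto
    then have "a = 0 \<or> a = 1" "b = 0 \<or> b = 1"
      by (metis mult_cancel_right2 mult_zero_right)+
    then have "Oct a u v b = 0 \<or> Oct a u v b = oone" using False z uv by (auto simp: oct_zero oone_def)
    then show ?thesis using assms unfolding ntidem_def by blast
  qed
qed

lemma idem_of_cond:
  assumes "a + b = 1" "a * b = dot3 u v"
  shows "omult (Oct a u v b) (Oct a u v b) = Oct a u v b"
proof -
  obtain u1 u2 u3 v1 v2 v3 where uv: "u = (u1,u2,u3)" "v = (v1,v2,v3)" by (metis prod_cases3)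
  have b: "b = 1 - a" using assms(1) by (simp add: algebra_simps)
  show ?thesis using assms unfolding uv b by (simp add: algebra_simps)
qed

lemma dot3_scale_l[simp]: "dot3 (vscale s u) v = s * dot3 u v"
  by (cases u, cases v) (simp add: algebra_simps)
lemma cross3_scale_self[simp]: "cross3 (vscale s u) u = (0,0,0)"
  by (cases u) (simp add: algebra_simps)
lemma vadd_zero_r[simp]: "vadd v (0,0,0) = v"
  by (cases v) simp
lemma vadd_zero_l[simp]: "vadd (0,0,0) v = v"
  by (cases v) simp
lemma vadd_self_scale: "vadd u (vscale c u) = vscale (1 + c) u"
  by (cases u) (simp add: algebra_simps)
lemma vscale_vscale[simp]: "vscale c (vscale s u) = vscale (c*s) u"
  by (cases u) (simp add: algebra_simps)
lemma vscale_zero[simp]: "vscale 0 u = (0,0,0)"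
  by (cases u) simp

lemma kill_u:
  assumes "a + b = 1" "a * b = dot3 u v"
  shows "\<exists>g\<in>G2. \<exists>a' b'. g (Oct a u v b) = Oct a' (0,0,0) v b'"
proof -
  define s where "s = (if a \<noteq> 0 then - 1 / a else 1 / b)"
  have fac: "1 + s * (a - b) - s * s * (a * b) = (1 + s * a) * (1 - s * b)" by (simp add: algebra_simps)
  have z: "1 + s * (a - b) - s * s * (a * b) = 0"
  proof (cases "a = 0")
    case True then have "b = 1" using assms by simp
    then show ?thesis using True fac by (simp add: s_def)
  next
    case False then show ?thesis using fac by (simp add: s_def field_simps)
  qed
  have k: "1 + (a - b - s * dot3 u v) * s = 0" using z assms(2) by (simp add: algebra_simps)
  have "Xw (vscale s u) (Oct a u v b) = Oct (a - s * dot3 u v) (0,0,0) v (b + s * dot3 u v)"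
    by (simp del: vscale.simps add: vadd_self_scale k)
  then show ?thesis using Xw_G2 by blast
qed

lemma T_idem: assumes "ntidem e" shows "\<exists>g\<in>G2. g e = oe1"
proof -
  obtain a u v b where e: "e = Oct a u v b" by (cases e)
  have c: "a + b = 1" "a * b = dot3 u v" using idem_cond[of a u v b] assms unfolding e by blast+
  obtain g1 a1 b1 where g1: "g1 \<in> G2" "g1 e = Oct a1 (0,0,0) v b1" using kill_u[OF c] e by blast
  have n1: "ntidem (sig (g1 e))" using ntidem_G2[OF sig_G2 ntidem_G2[OF g1(1) assms]] .
  have s1: "sig (g1 e) = Oct b1 (vscale (-1) v) (0,0,0) a1" using g1 by simp
  have c2: "b1 + a1 = 1" "b1 * a1 = dot3 (vscale (-1) v) (0,0,0)" using idem_cond[of b1 "vscale (-1) v" "(0,0,0)" a1] n1 unfolding s1 by blast+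
  obtain g2 a2 b2 where g2: "g2 \<in> G2" "g2 (sig (g1 e)) = Oct a2 (0,0,0) (0,0,0) b2"
    using kill_u[OF c2] s1 by metis
  have n2: "ntidem (Oct a2 (0,0,0) (0,0,0) b2)" using ntidem_G2[OF g2(1) n1] g2(2) by simp
  from idem_cond[OF n2] have "a2 + b2 = 1" "a2 * b2 = 0" by auto
  then have "(a2 = 1 \<and> b2 = 0) \<or> (a2 = 0 \<and> b2 = 1)" by (metis add_0 add_cancel_right_right mult_eq_0_iff)
  then show ?thesis
  proof
    assume "a2 = 1 \<and> b2 = 0"
    then have "(g2 \<circ> sig \<circ> g1) e = oe1" using g2 by (simp add: oe1_def)
    then show ?thesis using G2_comp g1(1) g2(1) sig_G2 by blast
  next
    assume "a2 = 0 \<and> b2 = 1"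
    then have "(sig \<circ> g2 \<circ> sig \<circ> g1) e = oe1" using g2 by (simp add: oe1_def)
    then show ?thesis using G2_comp g1(1) g2(1) sig_G2 by (metis comp_assoc)
  qed
qed

definition oU1 :: "'a::field oct" where "oU1 = Oct 0 (1,0,0) (0,0,0) 0"

lemma to_U1_rows:
  assumes "x \<noteq> (0,0,0)"
  shows "\<exists>r1 r2 r3. dot3 r1 (cross3 r2 r3) = 1 \<and> mv r1 r2 r3 x = (1,0,0) \<and> cross3 r2 r3 = x"
proof -
  obtain x1 x2 x3 where x: "x = (x1,x2,x3)" by (metis prod_cases3)
  consider "x1 \<noteq> 0" | "x1 = 0" "x2 \<noteq> 0" | "x1 = 0" "x2 = 0" "x3 \<noteq> 0" using assms x by auto
  then show ?thesis
  proof cases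
    case 1
    show ?thesis
      by (rule exI[of _ "(1/x1,0,0)"], rule exI[of _ "(-x2,x1,0)"], rule exI[of _ "(-x3/x1,0,1)"])
         (use 1 in \<open>simp add: x field_simps\<close>)
  next
    case 2
    show ?thesis
      by (rule exI[of _ "(0,1/x2,0)"], rule exI[of _ "(0,-x3,x2)"], rule exI[of _ "(1,-x1/x2,0)"])
         (use 2 in \<open>simp add: x field_simps\<close>)
  next
    case 3
    show ?thesis
      by (rule exI[of _ "(0,0,1/x3)"], rule exI[of _ "(x3,0,-x1)"], rule exI[of _ "(0,1,-x2/x3)"])
         (use 3 in \<open>simp add: x field_simps\<close>)
  qed
qed

lemma to_U1: assumes "x \<noteq> (0,0,0)" shows "\<exists>g\<in>G2. g (Oct 0 x (0,0,0) 0) = oU1"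
proof -
  obtain r1 r2 r3 where r: "dot3 r1 (cross3 r2 r3) = 1" "mv r1 r2 r3 x = (1,0,0)" using to_U1_rows[OF assms] by blast
  have "SM r1 r2 r3 (Oct 0 x (0,0,0) 0) = oU1"
    using r(2) by (cases r1, cases r2, cases r3) (simp del: mv.simps add: oU1_def, simp)
  then show ?thesis using SM_G2[OF r(1)] by blast
qed

lemma nil_cond:
  assumes "omult (Oct a u v b) (Oct a u v b) = 0" "Oct a u v b \<noteq> 0"
  shows "a + b = 0 \<and> a * b = dot3 u v"
proof -
  obtain u1 u2 u3 v1 v2 v3 where uv: "u = (u1,u2,u3)" "v = (v1,v2,v3)" by (metis prod_cases3)
  have e: "a*a + dot3 u v = 0" "b*b + dot3 v u = 0" "vadd (vadd (vscale a u) (vscale b u)) (vscale (-1) (cross3 v v)) = (0,0,0)"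
      "vadd (vadd (vscale a v) (vscale b v)) (cross3 u u) = (0,0,0)"
    using assms(1) by (auto simp: oct_zero)
  show ?thesis
  proof (cases "a + b = 0")
    case True
    then have b: "b = - a" by (metis add_eq_0_iff)
    have d: "dot3 u v = - (a*a)" using e(1) by (simp add: eq_neg_iff_add_eq_0 add.commute)
    have "a * b = - (a*a)" unfolding b by simp
    with d True show ?thesis by simp
  next
    case False
    have "(a + b) * u1 = 0" "(a + b) * u2 = 0" "(a + b) * u3 = 0"
         "(a + b) * v1 = 0" "(a + b) * v2 = 0" "(a + b) * v3 = 0"
      using e(3,4) unfolding uv by (simp_all add: algebra_simps)
    then have z: "u1 = 0" "u2 = 0" "u3 = 0" "v1 = 0" "v2 = 0" "v3 = 0" using False by simp_all
    then have "a * a = 0" "b * b = 0" using e(1,2) uv by auto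
    then have "a = 0" "b = 0" by simp_all
    then show ?thesis using assms(2) z uv by (simp add: oct_zero)
  qed
qed

lemma nil_G2: "g \<in> G2 \<Longrightarrow> omult y y = 0 \<Longrightarrow> omult (g y) (g y) = 0"
  by (metis G2_mult G2_zero)

lemma nil_G2': "g \<in> G2 \<Longrightarrow> y \<noteq> 0 \<Longrightarrow> g y \<noteq> 0"
  by (metis G2_zero G2_inj injD)

lemma T_nilA:
  assumes "a \<noteq> 0" "a + b = 0" "a * b = dot3 u v"
  shows "Xw (vscale (-1/a) u) (Oct a u v b) = Oct 0 (0,0,0) v 0"
proof -
  define s where "s = -1/a"
  have b: "b = - a" using assms(2) by (metis add_eq_0_iff)
  have d: "dot3 u v = - (a*a)" using assms(3) b by simp
  have k: "1 + (a - b - s * dot3 u v) * s = 0" using assms(1) unfolding b d s_def by (simp add: field_simps)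
  have e: "a - s * dot3 u v = 0" "b + s * dot3 u v = 0" using assms(1) unfolding b d s_def by (simp_all add: field_simps)
  have "Xw (vscale s u) (Oct a u v b) = Oct (a - s * dot3 u v) (vscale (1 + (a - b - s * dot3 u v) * s) u) v (b + s * dot3 u v)"
    by (simp del: vscale.simps add: vadd_self_scale)
  also have "\<dots> = Oct 0 (0,0,0) v 0" by (simp only: k e vscale_zero)
  finally show ?thesis unfolding s_def .
qed

lemma T_nil0:
  assumes "omult y y = 0" "y \<noteq> 0" "y = Oct a u v b" "a \<noteq> 0"
  shows "\<exists>g\<in>G2. g y = oU1"
proof -
  have c: "a + b = 0" "a * b = dot3 u v" using nil_cond assms by blast+
  have x1: "Xw (vscale (-1/a) u) y = Oct 0 (0,0,0) v 0" unfolding assms(3) by (rule T_nilA[OF assms(4) c])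
  have "Xw (vscale (-1/a) u) y \<noteq> 0" using nil_G2'[OF Xw_G2 assms(2)] .
  then have v: "v \<noteq> (0,0,0)" using x1 by (auto simp: oct_zero)
  have "sig (Xw (vscale (-1/a) u) y) = Oct 0 (vscale (-1) v) (0,0,0) 0" using x1 by simp
  moreover have "vscale (-1) v \<noteq> (0,0,0)" using v by (cases v) simp
  ultimately obtain g where g: "g \<in> G2" "g (sig (Xw (vscale (-1/a) u) y)) = oU1" using to_U1 by metis
  then have "(g \<circ> sig \<circ> Xw (vscale (-1/a) u)) y = oU1" by simp
  then show ?thesis using G2_comp g(1) sig_G2 Xw_G2 by blast
qed

lemma T_nil:
  assumes "omult y y = 0" "y \<noteq> 0"
  shows "\<exists>g\<in>G2. g y = oU1"
proof -
  obtain a u v b where y: "y = Oct a u v b" by (cases y)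
  have c: "a + b = 0" "a * b = dot3 u v" using nil_cond assms y by blast+
  show ?thesis
  proof (cases "a = 0")
    case False then show ?thesis using T_nil0 assms y by blast
  next
    case True
    then have b0: "b = 0" using c by simp
    show ?thesis
    proof (cases "v = (0,0,0)")
      case True
      then have "u \<noteq> (0,0,0)" using assms(2) y \<open>a = 0\<close> b0 by (auto simp: oct_zero)
      then show ?thesis using to_U1 y \<open>a = 0\<close> b0 True by blast
    next
      case False
      obtain v1 v2 v3 where vv: "v = (v1,v2,v3)" by (metis prod_cases3)
      define w :: "'a vec3" where "w = (if v1 \<noteq> 0 then (1,0,0) else if v2 \<noteq> 0 then (0,1,0) else (0,0,1))"
      have wv: "dot3 w v \<noteq> 0" using False unfolding w_def vv by auto
      obtain a' u' v' b' where y': "Xw w y = Oct a' u' v' b'" by (cases "Xw w y")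
      have "a' = - dot3 w v" using y' unfolding y \<open>a = 0\<close> by simp
      then have a': "a' \<noteq> 0" using wv by simp
      have n': "omult (Xw w y) (Xw w y) = 0" "Xw w y \<noteq> 0"
        using nil_G2[OF Xw_G2 assms(1)] nil_G2'[OF Xw_G2 assms(2)] by auto
      obtain g where "g \<in> G2" "g (Xw w y) = oU1" using T_nil0[OF n' y' a'] by blast
      then show ?thesis using G2_comp[OF _ Xw_G2] by (metis comp_apply)
    qed
  qed
qed



lemma alg_closed_infinite:
  assumes "alg_closed TYPE('a::field)" shows "infinite (UNIV :: 'a set)"
proof
  assume fin: "finite (UNIV :: 'a set)"
  define q :: "'a poly" where "q = (\<Prod>a\<in>UNIV. [:-a, 1:])"
  have dq: "degree q = card (UNIV :: 'a set)"
    unfolding q_def by (subst degree_prod_eq_sum_degree) auto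
  have "card (UNIV :: 'a set) \<ge> 1" using fin by (simp add: Suc_le_eq card_gt_0_iff)
  then have "degree (q + 1) \<ge> 1" using dq by (simp add: degree_add_eq_left)
  then obtain x where "poly (q + 1) x = 0" using assms unfolding alg_closed_def by blast
  moreover have "poly q x = 0" unfolding q_def poly_prod using fin
    by (intro prod_zero) (auto intro!: bexI[of _ x])
  ultimately show False by simp
qed

lemma peval_poly:
  assumes "\<And>k t. X t k = poly (Q k) t"
  shows "\<exists>r. \<forall>t. peval p (X t) = poly r t"
proof (induction p)
  case (PConst c) then show ?case by (intro exI[of _ "[:c:]"]) simp
next
  case (PVar i) then show ?case using assms by (intro exI[of _ "Q i"]) simp
next
  case (PAdd p1 p2)
  then obtain r1 r2 where "\<forall>t. peval p1 (X t) = poly r1 t" "\<forall>t. peval p2 (X t) = poly r2 t" by blast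
  then show ?case by (intro exI[of _ "r1 + r2"]) simp
next
  case (PMul p1 p2)
  then obtain r1 r2 where "\<forall>t. peval p1 (X t) = poly r1 t" "\<forall>t. peval p2 (X t) = poly r2 t" by blast
  then show ?case by (intro exI[of _ "r1 * r2"]) simp
qed

lemma deg_generic:
  fixes as :: "'a::field oct list"
  assumes zc: "zariski_closed d (G2_orbit_tuple as)" and li: "lin_indep as"
    and inf: "infinite (UNIV::'a set)"
    and C: "\<And>t. t \<noteq> 0 \<Longrightarrow> C t \<in> G2_orbit_tuple as"
    and len: "\<And>t. length (C t) = length as"
    and pol: "\<And>k. \<exists>q. \<forall>t. tuple_coords (C t) k = poly q t"
    and dep: "\<not> lin_indep (C 0)"
  shows False
proof -
  obtain P where S: "G2_orbit_tuple as = {xs. length xs = d \<and> (\<forall>p\<in>P. peval p (tuple_coords xs) = 0)}"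
    using zc unfolding zariski_closed_def by blast
  have "as \<in> G2_orbit_tuple as" unfolding G2_orbit_tuple_def using G2_id by force
  then have ld: "length as = d" using S by auto
  obtain Q where Q: "\<And>k t. tuple_coords (C t) k = poly (Q k) t" using pol by metis
  have "peval p (tuple_coords (C 0)) = 0" if p: "p \<in> P" for p
  proof -
    obtain r where r: "\<And>t. peval p (tuple_coords (C t)) = poly r t"
      using peval_poly[of "\<lambda>t. tuple_coords (C t)" Q p] Q by blast
    have "UNIV - {0} \<subseteq> {t. poly r t = 0}"
    proof
      fix t assume "t \<in> (UNIV :: 'a set) - {0}"
      then have "C t \<in> G2_orbit_tuple as" using C by auto
      then show "t \<in> {t. poly r t = 0}" using S p r by auto
    qed
    moreover have "infinite (UNIV - {0 :: 'a})" using inf by simp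
    ultimately have "infinite {t. poly r t = 0}" using infinite_super by blast
    then have "r = 0" using poly_roots_finite by blast
    then show ?thesis using r by simp
  qed
  then have "C 0 \<in> G2_orbit_tuple as" using S len ld by auto
  then obtain g where "g \<in> G2" "C 0 = map g as" unfolding G2_orbit_tuple_def by auto
  then show False using G2_indep li dep by metis
qed

fun inP :: "'a::field oct \<Rightarrow> bool" where
  "inP (Oct a (u1,u2,u3) (v1,v2,v3) b) = (u2 = 0 \<and> u3 = 0 \<and> v1 = 0)"
fun inP2 :: "'a::field oct \<Rightarrow> bool" where
  "inP2 (Oct a (u1,u2,u3) (v1,v2,v3) b) = (u3 = 0 \<and> v1 = 0 \<and> v2 = 0)"
fun pos0 :: "'a::field oct \<Rightarrow> bool" where
  "pos0 (Oct a u v b) = (a = 0 \<and> b = 0)"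
fun Dc :: "'a::field \<Rightarrow> 'a oct \<Rightarrow> 'a oct" where
  "Dc t (Oct a (u1,u2,u3) (v1,v2,v3) b) = Oct a (t*t*u1,0,0) (0,t*v2,t*v3) b"
fun Dc2 :: "'a::field \<Rightarrow> 'a oct \<Rightarrow> 'a oct" where
  "Dc2 t (Oct a (u1,u2,u3) (v1,v2,v3) b) = Oct a (t*u1,t*u2,0) (0,0,t*t*v3) b"

lemma Dc_lin: "Dc t (lin_comb c xs) = lin_comb c (map (Dc t) xs)"
proof -
  have a: "Dc t (x + y) = Dc t x + Dc t y" for x y
    by (rule oct8_cases[of x], rule oct8_cases[of y]) (simp add: algebra_simps)
  have s: "Dc t (oscale k x) = oscale k (Dc t x)" for k x
    by (rule oct8_cases[of x]) (simp add: algebra_simps)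
  have z: "Dc t 0 = 0" by (simp add: oct_zero)
  show ?thesis
  proof (induction xs arbitrary: c)
    case Nil then show ?case using z by simp
  next
    case (Cons x xs) then show ?case using a s z by (cases c) auto
  qed
qed

lemma Dc2_lin: "Dc2 t (lin_comb c xs) = lin_comb c (map (Dc2 t) xs)"
proof -
  have a: "Dc2 t (x + y) = Dc2 t x + Dc2 t y" for x y
    by (rule oct8_cases[of x], rule oct8_cases[of y]) (simp add: algebra_simps)
  have s: "Dc2 t (oscale k x) = oscale k (Dc2 t x)" for k x
    by (rule oct8_cases[of x]) (simp add: algebra_simps)
  have z: "Dc2 t 0 = 0" by (simp add: oct_zero)
  show ?thesis
  proof (induction xs arbitrary: c)
    case Nil then show ?case using z by simp
  next
    case (Cons x xs) then show ?case using a s z by (cases c) auto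
  qed
qed

lemma Dc_poly: "\<exists>q. \<forall>t. ocoord (Dc t x) j = poly q t"
proof -
  obtain a u1 u2 u3 v1 v2 v3 b where x: "x = Oct a (u1,u2,u3) (v1,v2,v3) b" by (rule oct8_cases)
  define q where "q = (if j = 0 then [:a:] else if j = 1 then [:0,0,u1:] else if j = 5 then [:0,v2:]
     else if j = 6 then [:0,v3:] else if j = 7 then [:b:] else 0)"
  have "ocoord (Dc t x) j = poly q t" for t
    unfolding x q_def by (simp add: algebra_simps)
  then show ?thesis by blast
qed

lemma Dc2_poly: "\<exists>q. \<forall>t. ocoord (Dc2 t x) j = poly q t"
proof -
  obtain a u1 u2 u3 v1 v2 v3 b where x: "x = Oct a (u1,u2,u3) (v1,v2,v3) b" by (rule oct8_cases)
  define q where "q = (if j = 0 then [:a:] else if j = 1 then [:0,u1:] else if j = 2 then [:0,u2:]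
     else if j = 6 then [:0,0,v3:] else if j = 7 then [:b:] else 0)"
  have "ocoord (Dc2 t x) j = poly q t" for t
    unfolding x q_def by (simp add: algebra_simps)
  then show ?thesis by blast
qed

lemma tc_poly:
  assumes "\<And>x j. \<exists>q. \<forall>t. ocoord (D t x) j = poly q t"
  shows "\<exists>q. \<forall>t. tuple_coords (map (D t) bs) k = poly q t"
proof (cases "k < 8 * length bs")
  case True
  obtain q where "\<forall>t. ocoord (D t (bs ! (k div 8))) (k mod 8) = poly q t" using assms by blast
  then show ?thesis using True by (auto simp: tuple_coords_def)
next
  case False then show ?thesis by (intro exI[of _ 0]) (simp add: tuple_coords_def)
qed

lemma Tor_eq: "t \<noteq> 0 \<Longrightarrow> inP x \<Longrightarrow> SM (t*t,0,0) (0,1/t,0) (0,0,1/t) x = Dc t x"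
  by (rule oct8_cases[of x]) (simp add: field_simps)
lemma Tor_G2: "t \<noteq> 0 \<Longrightarrow> SM (t*t,0,0) (0,1/t,0) (0,0,1/t) \<in> G2"
  by (rule SM_G2) (simp add: field_simps)
lemma Tor2_eq: "t \<noteq> 0 \<Longrightarrow> inP2 x \<Longrightarrow> SM (t,0,0) (0,t,0) (0,0,1/(t*t)) x = Dc2 t x"
  by (rule oct8_cases[of x]) (simp add: field_simps)
lemma Tor2_G2: "t \<noteq> 0 \<Longrightarrow> SM (t,0,0) (0,t,0) (0,0,1/(t*t)) \<in> G2"
  by (rule SM_G2) (simp add: field_simps)

lemma Dc_pos0: "pos0 y \<Longrightarrow> Dc 0 y = 0"
  by (rule oct8_cases[of y]) (simp add: oct_zero)
lemma Dc2_pos0: "pos0 y \<Longrightarrow> Dc2 0 y = 0"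
  by (rule oct8_cases[of y]) (simp add: oct_zero)

lemma deg_main:
  fixes as :: "'a::field oct list"
  assumes zc: "zariski_closed d (G2_orbit_tuple as)" and li: "lin_indep as"
    and inf: "infinite (UNIV::'a set)" and g: "g \<in> G2"
    and P: "\<forall>x\<in>span_list as. inP (g x)"
    and X: "\<exists>x\<in>span_list as. g x \<noteq> 0 \<and> pos0 (g x)"
  shows False
proof -
  have inas: "set as \<subseteq> span_list as"
  proof
    fix x assume "x \<in> set as"
    then obtain i where i: "i < length as" "as ! i = x" by (meson in_set_conv_nth)
    define c where "c = map (\<lambda>k. if k = i then (1::'a) else 0) [0..<length as]"
    have "lin_comb c as = (\<Sum>k<length as. oscale (c!k) (as!k))" by (rule lin_comb_sum) (simp add: c_def)
    also have "\<dots> = (\<Sum>k\<in>{i}. oscale (c!k) (as!k))"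
      by (rule sum.mono_neutral_right) (use i in \<open>auto simp: c_def\<close>)
    also have "\<dots> = x" using i by (simp add: c_def)
    finally show "x \<in> span_list as" unfolding span_list_def by (intro CollectI exI[of _ c]) (simp add: c_def)
  qed
  define C where "C t = map (Dc t) (map g as)" for t
  show False
  proof (rule deg_generic[OF zc li inf, of C])
    fix t :: 'a assume t: "t \<noteq> 0"
    have "C t = map (SM (t*t,0,0) (0,1/t,0) (0,0,1/t) \<circ> g) as"
      unfolding C_def using Tor_eq[OF t] P inas by auto
    then show "C t \<in> G2_orbit_tuple as" unfolding G2_orbit_tuple_def using G2_comp[OF Tor_G2[OF t] g] by blast
  next
    show "length (C t) = length as" for t by (simp add: C_def)
  next
    show "\<exists>q. \<forall>t. tuple_coords (C t) k = poly q t" for k unfolding C_def by (rule tc_poly, rule Dc_poly)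
  next
    show "\<not> lin_indep (C 0)"
    proof
      assume L: "lin_indep (C 0)"
      obtain x where x: "x \<in> span_list as" "g x \<noteq> 0" "pos0 (g x)" using X by blast
      obtain c where c: "length c = length as" "x = lin_comb c as" using x(1) unfolding span_list_def by blast
      have "Dc 0 (g x) = 0" using x(3) by (rule Dc_pos0)
      moreover have "Dc 0 (g x) = lin_comb c (C 0)" unfolding c(2) C_def G2_lin_comb[OF g] Dc_lin ..
      ultimately have "\<forall>k\<in>set c. k = 0" using L c(1) unfolding lin_indep_def by (simp add: C_def ozero_is_0)
      then have "lin_comb c as = 0"
        by (induction c arbitrary: as) (auto, metis lin_comb_Cons lin_comb_Nil(2) neq_Nil_conv oscale_zero add_0)
      then show False using x(2) c(2) G2_zero[OF g] by simp
    qed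
  qed
qed

lemma deg_main2:
  fixes as :: "'a::field oct list"
  assumes zc: "zariski_closed d (G2_orbit_tuple as)" and li: "lin_indep as"
    and inf: "infinite (UNIV::'a set)" and g: "g \<in> G2"
    and P: "\<forall>x\<in>span_list as. inP2 (g x)"
    and X: "\<exists>x\<in>span_list as. g x \<noteq> 0 \<and> pos0 (g x)"
  shows False
proof -
  have inas: "set as \<subseteq> span_list as"
  proof
    fix x assume "x \<in> set as"
    then obtain i where i: "i < length as" "as ! i = x" by (meson in_set_conv_nth)
    define c where "c = map (\<lambda>k. if k = i then (1::'a) else 0) [0..<length as]"
    have "lin_comb c as = (\<Sum>k<length as. oscale (c!k) (as!k))" by (rule lin_comb_sum) (simp add: c_def)
    also have "\<dots> = (\<Sum>k\<in>{i}. oscale (c!k) (as!k))"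
      by (rule sum.mono_neutral_right) (use i in \<open>auto simp: c_def\<close>)
    also have "\<dots> = x" using i by (simp add: c_def)
    finally show "x \<in> span_list as" unfolding span_list_def by (intro CollectI exI[of _ c]) (simp add: c_def)
  qed
  define C where "C t = map (Dc2 t) (map g as)" for t
  show False
  proof (rule deg_generic[OF zc li inf, of C])
    fix t :: 'a assume t: "t \<noteq> 0"
    have "C t = map (SM (t,0,0) (0,t,0) (0,0,1/(t*t)) \<circ> g) as"
      unfolding C_def using Tor2_eq[OF t] P inas by auto
    then show "C t \<in> G2_orbit_tuple as" unfolding G2_orbit_tuple_def using G2_comp[OF Tor2_G2[OF t] g] by blast
  next
    show "length (C t) = length as" for t by (simp add: C_def)
  next
    show "\<exists>q. \<forall>t. tuple_coords (C t) k = poly q t" for k unfolding C_def by (rule tc_poly, rule Dc2_poly)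
  next
    show "\<not> lin_indep (C 0)"
    proof
      assume L: "lin_indep (C 0)"
      obtain x where x: "x \<in> span_list as" "g x \<noteq> 0" "pos0 (g x)" using X by blast
      obtain c where c: "length c = length as" "x = lin_comb c as" using x(1) unfolding span_list_def by blast
      have "Dc2 0 (g x) = 0" using x(3) by (rule Dc2_pos0)
      moreover have "Dc2 0 (g x) = lin_comb c (C 0)" unfolding c(2) C_def G2_lin_comb[OF g] Dc2_lin ..
      ultimately have "\<forall>k\<in>set c. k = 0" using L c(1) unfolding lin_indep_def by (simp add: C_def ozero_is_0)
      then have "lin_comb c as = 0"
        by (induction c arbitrary: as) (auto, metis lin_comb_Cons lin_comb_Nil(2) neq_Nil_conv oscale_zero add_0)
      then show False using x(2) c(2) G2_zero[OF g] by simp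
    qed
  qed
qed




definition nodeg :: "'a::field oct set \<Rightarrow> bool" where
  "nodeg B \<longleftrightarrow> (\<forall>g\<in>G2. \<not> ((\<forall>x\<in>B. inP (g x)) \<and> (\<exists>x\<in>B. g x \<noteq> 0 \<and> pos0 (g x)))
                      \<and> \<not> ((\<forall>x\<in>B. inP2 (g x)) \<and> (\<exists>x\<in>B. g x \<noteq> 0 \<and> pos0 (g x))))"

definition good :: "'a::field oct set \<Rightarrow> nat \<Rightarrow> bool" where
  "good B d \<longleftrightarrow> subalgebra B \<and> (\<exists>bs. B = span_list bs \<and> lin_indep bs \<and> length bs = d) \<and> nodeg B"

lemma nodeg_image: assumes "nodeg B" "h \<in> G2" shows "nodeg (h ` B)"
  unfolding nodeg_def
proof (intro ballI)
  fix g :: "'a oct \<Rightarrow> 'a oct" assume g: "g \<in> G2"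
  have gh: "g \<circ> h \<in> G2" using G2_comp g assms(2) by blast
  have H: "\<not> ((\<forall>x\<in>B. inP ((g \<circ> h) x)) \<and> (\<exists>x\<in>B. (g \<circ> h) x \<noteq> 0 \<and> pos0 ((g \<circ> h) x)))"
     "\<not> ((\<forall>x\<in>B. inP2 ((g \<circ> h) x)) \<and> (\<exists>x\<in>B. (g \<circ> h) x \<noteq> 0 \<and> pos0 ((g \<circ> h) x)))"
    using assms(1) gh unfolding nodeg_def by blast+
  then show "\<not> ((\<forall>x\<in>h ` B. inP (g x)) \<and> (\<exists>x\<in>h ` B. g x \<noteq> 0 \<and> pos0 (g x))) \<and>
             \<not> ((\<forall>x\<in>h ` B. inP2 (g x)) \<and> (\<exists>x\<in>h ` B. g x \<noteq> 0 \<and> pos0 (g x)))"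
    by auto
qed

lemma good_sub: "good B d \<Longrightarrow> subalgebra B" unfolding good_def by simp

lemma good_image: assumes "good B d" "g \<in> G2" shows "good (g ` B) d"
proof -
  obtain bs where bs: "B = span_list bs" "lin_indep bs" "length bs = d" using assms(1) unfolding good_def by blast
  have "g ` B = span_list (map g bs)" using G2_span[OF assms(2)] bs(1) by simp
  moreover have "lin_indep (map g bs)" using G2_indep[OF assms(2) bs(2)] .
  moreover have "subalgebra (g ` B)" using subalg_image assms good_sub unfolding good_def by blast
  moreover have "nodeg (g ` B)" using nodeg_image assms unfolding good_def by blast
  ultimately show ?thesis using bs(3) unfolding good_def by (metis length_map)
qed

lemma good_bound: assumes "good B d" "lin_indep zs" "set zs \<subseteq> B" shows "length zs \<le> d"
  using assms bound unfolding good_def by metis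


lemma good_P: assumes "good B d" "\<forall>x\<in>B. inP x" "x \<in> B" "x \<noteq> 0" "pos0 x" shows False
  using assms G2_id unfolding good_def nodeg_def by (metis id_apply)
lemma good_P2: assumes "good B d" "\<forall>x\<in>B. inP2 x" "x \<in> B" "x \<noteq> 0" "pos0 x" shows False
  using assms G2_id unfolding good_def nodeg_def by (metis id_apply)

lemma sa_zero: "subalgebra B \<Longrightarrow> 0 \<in> B" unfolding subalgebra_def ozero_is_0 by simp
lemma sa_add: "subalgebra B \<Longrightarrow> x \<in> B \<Longrightarrow> y \<in> B \<Longrightarrow> x + y \<in> B"
  unfolding subalgebra_def oadd_is_plus by simp
lemma sa_scale: "subalgebra B \<Longrightarrow> x \<in> B \<Longrightarrow> oscale c x \<in> B"
  unfolding subalgebra_def by simp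
lemma sa_mult: "subalgebra B \<Longrightarrow> x \<in> B \<Longrightarrow> y \<in> B \<Longrightarrow> omult x y \<in> B"
  unfolding subalgebra_def by simp
lemma sa_diff: "subalgebra B \<Longrightarrow> x \<in> B \<Longrightarrow> y \<in> B \<Longrightarrow> x - y \<in> B"
  by (metis sa_add sa_scale minus_oct_def oadd_is_plus)

lemma oct_diff[simp]: "Oct a u v b - Oct a' u' v' b' = Oct (a - a') (vadd u (vscale (-1) u')) (vadd v (vscale (-1) v')) (b - b')"
  by (simp add: minus_oct_def)

lemma indep4I:
  assumes "\<And>c1 c2 c3 c4. oscale c1 x1 + oscale c2 x2 + oscale c3 x3 + oscale c4 x4 = 0 \<Longrightarrow> c1 = 0 \<and> c2 = 0 \<and> c3 = 0 \<and> c4 = 0"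
  shows "lin_indep [x1,x2,x3,x4]"
  unfolding lin_indep_def ozero_is_0
proof (intro allI impI)
  fix cs :: "'a list" assume h: "length cs = length [x1,x2,x3,x4] \<and> lin_comb cs [x1,x2,x3,x4] = 0"
  then have "length cs = 4" by simp
  then obtain c1 c2 c3 c4 where cs: "cs = [c1,c2,c3,c4]"
    by (auto simp: length_Suc_conv numeral_eq_Suc)
  have "oscale c1 x1 + oscale c2 x2 + oscale c3 x3 + oscale c4 x4 = 0" using h unfolding cs by (simp add: add.assoc)
  then show "\<forall>c\<in>set cs. c = 0" using assms cs by auto
qed

lemma indep3I:
  assumes "\<And>c1 c2 c3. oscale c1 x1 + oscale c2 x2 + oscale c3 x3 = 0 \<Longrightarrow> c1 = 0 \<and> c2 = 0 \<and> c3 = 0"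
  shows "lin_indep [x1,x2,x3]"
  unfolding lin_indep_def ozero_is_0
proof (intro allI impI)
  fix cs :: "'a list" assume h: "length cs = length [x1,x2,x3] \<and> lin_comb cs [x1,x2,x3] = 0"
  then have "length cs = 3" by simp
  then obtain c1 c2 c3 where cs: "cs = [c1,c2,c3]"
    by (auto simp: length_Suc_conv numeral_eq_Suc)
  have "oscale c1 x1 + oscale c2 x2 + oscale c3 x3 = 0" using h unfolding cs by (simp add: add.assoc)
  then show "\<forall>c\<in>set cs. c = 0" using assms cs by auto
qed

lemma indep2I:
  assumes "\<And>c1 c2. oscale c1 x1 + oscale c2 x2 = 0 \<Longrightarrow> c1 = 0 \<and> c2 = 0"
  shows "lin_indep [x1,x2]"
  unfolding lin_indep_def ozero_is_0
proof (intro allI impI)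
  fix cs :: "'a list" assume h: "length cs = length [x1,x2] \<and> lin_comb cs [x1,x2] = 0"
  then have "length cs = 2" by simp
  then obtain c1 c2 where cs: "cs = [c1,c2]"
    by (auto simp: length_Suc_conv numeral_eq_Suc)
  have "oscale c1 x1 + oscale c2 x2 = 0" using h unfolding cs by (simp add: add.assoc)
  then show "\<forall>c\<in>set cs. c = 0" using assms cs by auto
qed

lemma good_four: assumes "good B d" "d \<le> 3" "x1 \<in> B" "x2 \<in> B" "x3 \<in> B" "x4 \<in> B" "lin_indep [x1,x2,x3,x4]"
  shows False
  using good_bound[OF assms(1) assms(7)] assms(2-6) by simp



lemma span_list_1: "y \<in> span_list [x1] \<longleftrightarrow> (\<exists>c1. y = oscale c1 x1)"
proof
  assume "y \<in> span_list [x1]"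
  then obtain cs where "length cs = 1" "y = lin_comb cs [x1]" unfolding span_list_def by auto
  then show "\<exists>c1. y = oscale c1 x1" by (auto simp: length_Suc_conv)
next
  assume "\<exists>c1. y = oscale c1 x1"
  then obtain c1 where "y = lin_comb [c1] [x1]" by auto
  then show "y \<in> span_list [x1]" unfolding span_list_def by (intro CollectI exI[of _ "[c1]"]) simp
qed

lemma span_list_2: "y \<in> span_list [x1,x2] \<longleftrightarrow> (\<exists>c1 c2. y = oscale c1 x1 + oscale c2 x2)"
proof
  assume "y \<in> span_list [x1,x2]"
  then obtain cs where "length cs = Suc (Suc 0)" "y = lin_comb cs [x1,x2]" unfolding span_list_def by auto
  then show "\<exists>c1 c2. y = oscale c1 x1 + oscale c2 x2" by (auto simp: length_Suc_conv) blast
next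
  assume "\<exists>c1 c2. y = oscale c1 x1 + oscale c2 x2"
  then obtain c1 c2 where "y = lin_comb [c1,c2] [x1,x2]" by auto
  then show "y \<in> span_list [x1,x2]" unfolding span_list_def by (intro CollectI exI[of _ "[c1,c2]"]) simp
qed

lemma set_sub_span: "set as \<subseteq> span_list (as :: 'a::field oct list)"
proof
  fix x assume "x \<in> set as"
  then obtain i where i: "i < length as" "as ! i = x" by (meson in_set_conv_nth)
  define c where "c = map (\<lambda>k. if k = i then (1::'a) else 0) [0..<length as]"
  have "lin_comb c as = (\<Sum>k<length as. oscale (c!k) (as!k))" by (rule lin_comb_sum) (simp add: c_def)
  also have "\<dots> = (\<Sum>k\<in>{i}. oscale (c!k) (as!k))"
    by (rule sum.mono_neutral_right) (use i in \<open>auto simp: c_def\<close>)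
  also have "\<dots> = x" using i by (simp add: c_def)
  finally show "x \<in> span_list as" unfolding span_list_def by (intro CollectI exI[of _ c]) (simp add: c_def)
qed

lemma good_dim_le: assumes "good B d" "B \<subseteq> span_list zs" shows "d \<le> length zs"
proof -
  obtain bs where "B = span_list bs" "lin_indep bs" "length bs = d" using assms(1) unfolding good_def by blast
  then show ?thesis using bound[of bs zs] set_sub_span[of bs] assms(2) by auto
qed

lemma nodegE: assumes "good B d" "g \<in> G2" "\<forall>x\<in>B. inP (g x)" "x \<in> B" "g x \<noteq> 0" "pos0 (g x)" shows False
  using assms unfolding good_def nodeg_def by blast
lemma nodegE2: assumes "good B d" "g \<in> G2" "\<forall>x\<in>B. inP2 (g x)" "x \<in> B" "g x \<noteq> 0" "pos0 (g x)" shows False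
  using assms unfolding good_def nodeg_def by blast

lemma graded:
  assumes "subalgebra C" "oe1 \<in> C" "Oct a u v b \<in> C"
  shows "Oct 0 u (0,0,0) 0 \<in> C" "Oct 0 (0,0,0) v 0 \<in> C" "Oct 0 (0,0,0) (0,0,0) b \<in> C" "Oct a (0,0,0) (0,0,0) 0 \<in> C"
proof -
  obtain u1 u2 u3 v1 v2 v3 where uv: "u = (u1,u2,u3)" "v = (v1,v2,v3)" by (metis prod_cases3)
  have m1: "omult oe1 (Oct a u v b) = Oct a u (0,0,0) 0" unfolding uv oe1_def by simp
  have m2: "omult (Oct a u v b) oe1 = Oct a (0,0,0) v 0" unfolding uv oe1_def by simp
  have m3: "omult (Oct a u (0,0,0) 0) oe1 = Oct a (0,0,0) (0,0,0) 0" unfolding uv oe1_def by simp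
  have i1: "Oct a u (0,0,0) 0 \<in> C" "Oct a (0,0,0) v 0 \<in> C" using sa_mult[OF assms(1)] assms m1 m2 by metis+
  then show i4: "Oct a (0,0,0) (0,0,0) 0 \<in> C" using sa_mult[OF assms(1)] assms m3 by metis
  have "Oct a u (0,0,0) 0 - Oct a (0,0,0) (0,0,0) 0 \<in> C" by (rule sa_diff[OF assms(1) i1(1) i4])
  then show "Oct 0 u (0,0,0) 0 \<in> C" unfolding uv by simp
  have "Oct a (0,0,0) v 0 - Oct a (0,0,0) (0,0,0) 0 \<in> C" by (rule sa_diff[OF assms(1) i1(2) i4])
  then show "Oct 0 (0,0,0) v 0 \<in> C" unfolding uv by simp
  have "Oct a u v b - Oct a u (0,0,0) 0 - Oct 0 (0,0,0) v 0 \<in> C"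
    by (intro sa_diff[OF assms(1)] assms(3) i1(1)) (use \<open>Oct 0 (0,0,0) v 0 \<in> C\<close> in simp)
  then show "Oct 0 (0,0,0) (0,0,0) b \<in> C" unfolding uv by simp
qed

lemma cross_comb_l: "cross3 (vadd (vscale c2 x) (vscale c3 u)) u = vscale c2 (cross3 x u)"
  by (cases x, cases u) (simp add: algebra_simps)
lemma cross_comb_r: "cross3 x (vadd (vscale c2 x) (vscale c3 u)) = vscale c3 (cross3 x u)"
  by (cases x, cases u) (simp add: algebra_simps)
lemma vscale_eq0: "vscale c x = (0,0,0) \<Longrightarrow> x \<noteq> (0,0,0) \<Longrightarrow> c = 0"
  by (cases x) auto

lemma vec_indep2:
  assumes "cross3 x u \<noteq> (0,0,0)" "vadd (vscale c2 x) (vscale c3 u) = (0,0,0)"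
  shows "c2 = 0 \<and> c3 = 0"
proof -
  have "vscale c2 (cross3 x u) = (0,0,0)" using cross_comb_l[of c2 x c3 u] assms(2) by (cases u) simp
  moreover have "vscale c3 (cross3 x u) = (0,0,0)" using cross_comb_r[of x c2 c3 u] assms(2) by (cases x) simp
  ultimately show ?thesis using vscale_eq0 assms(1) by blast
qed

lemma parallel:
  assumes "x \<noteq> (0,0,0)" "cross3 x u = (0,0,0)"
  shows "\<exists>c. u = vscale c x"
proof -
  obtain x1 x2 x3 u1 u2 u3 where xu: "x = (x1,x2,x3)" "u = (u1,u2,u3)" by (metis prod_cases3)
  have e: "x2 * u3 = x3 * u2" "x3 * u1 = x1 * u3" "x1 * u2 = x2 * u1" using assms(2) unfolding xu by auto
  consider "x1 \<noteq> 0" | "x2 \<noteq> 0" | "x3 \<noteq> 0" using assms(1) xu by auto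
  then show ?thesis
  proof cases
    case 1 show ?thesis by (rule exI[of _ "u1/x1"]) (use 1 e in \<open>auto simp: xu field_simps\<close>)
  next
    case 2 show ?thesis by (rule exI[of _ "u2/x2"]) (use 2 e in \<open>auto simp: xu field_simps\<close>)
  next
    case 3 show ?thesis by (rule exI[of _ "u3/x3"]) (use 3 e in \<open>auto simp: xu field_simps\<close>)
  qed
qed

lemma indep_I2a:
  assumes "cross3 x u \<noteq> (0,0,0)"
  shows "lin_indep [oe1, Oct 0 x (0,0,0) 0, Oct 0 u (0,0,0) 0, Oct 0 (0,0,0) (cross3 x u) 0]"
proof (rule indep4I)
  fix c1 c2 c3 c4 :: 'a
  assume h: "oscale c1 oe1 + oscale c2 (Oct 0 x (0,0,0) 0) + oscale c3 (Oct 0 u (0,0,0) 0) + oscale c4 (Oct 0 (0,0,0) (cross3 x u) 0) = 0"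
  then have "c1 = 0" "vadd (vscale c2 x) (vscale c3 u) = (0,0,0)" "vscale c4 (cross3 x u) = (0,0,0)"
    by (simp_all add: oe1_def oct_zero)
  then show "c1 = 0 \<and> c2 = 0 \<and> c3 = 0 \<and> c4 = 0" using vec_indep2 vscale_eq0 assms by blast
qed

lemma indep_I2b:
  assumes "x \<noteq> (0,0,0)" "v \<noteq> (0,0,0)"
  shows "lin_indep [oe1, oe2, Oct 0 x (0,0,0) 0, Oct 0 (0,0,0) v 0]"
proof (rule indep4I)
  fix c1 c2 c3 c4 :: 'a
  assume h: "oscale c1 oe1 + oscale c2 oe2 + oscale c3 (Oct 0 x (0,0,0) 0) + oscale c4 (Oct 0 (0,0,0) v 0) = 0"
  then have "c1 = 0" "c2 = 0" "vscale c3 x = (0,0,0)" "vscale c4 v = (0,0,0)"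
    by (simp_all add: oe1_def oe2_def oct_zero)
  then show "c1 = 0 \<and> c2 = 0 \<and> c3 = 0 \<and> c4 = 0" using vscale_eq0 assms by blast
qed

lemma indep_e12: "lin_indep [oe1, oe2]"
  by (rule indep2I) (simp add: oe1_def oe2_def oct_zero)

lemma mult_UU: "omult (Oct 0 x (0,0,0) 0) (Oct 0 u (0,0,0) 0) = Oct 0 (0,0,0) (cross3 x u) 0"
  by (cases x, cases u) simp
lemma mult_VU: "omult (Oct 0 (0,0,0) v 0) (Oct 0 x (0,0,0) 0) = Oct 0 (0,0,0) (0,0,0) (dot3 v x)"
  by (cases x, cases v) simp
lemma mult_VV: "omult (Oct 0 (0,0,0) v 0) (Oct 0 (0,0,0) y 0) = Oct 0 (vscale (-1) (cross3 v y)) (0,0,0) 0"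
  by (cases y, cases v) simp

lemma dot3_comm: "dot3 v x = dot3 x v" by (cases x, cases v) (simp add: algebra_simps)
lemma cross3_anti: "cross3 v y = vscale (-1) (cross3 y v)" by (cases y, cases v) (simp add: algebra_simps)

lemma SM_vals:
  assumes "cross3 r2 r3 = x" "mv r1 r2 r3 x = (1,0,0)" "u = vscale c x" "dot3 x v = 0"
  shows "inP (SM r1 r2 r3 (Oct a u v b))"
proof -
  have mu: "mv r1 r2 r3 u = (c,0,0)" using assms(2,3) mv_scale[of r1 r2 r3 c x] by simp
  have "fst (mv (cross3 r2 r3) (cross3 r3 r1) (cross3 r1 r2) v) = 0" using assms(1,4) by simp
  then show ?thesis using mu by (cases "mv (cross3 r2 r3) (cross3 r3 r1) (cross3 r1 r2) v") (simp del: mv.simps)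
qed

lemma caseI:
  assumes gd: "good B d" and d3: "d \<le> 3" and e1: "oe1 \<in> B"
  shows "(d = 1 \<and> B = span_list [oe1]) \<or> (d = 2 \<and> B = span_list [oe1, oe2])"
proof -
  have sub: "subalgebra B" using gd good_sub by blast
  consider (U) "\<exists>a u v b. Oct a u v b \<in> B \<and> u \<noteq> (0,0,0)"
    | (V) "\<forall>a u v b. Oct a u v b \<in> B \<longrightarrow> u = (0,0,0)" "\<exists>a u v b. Oct a u v b \<in> B \<and> v \<noteq> (0,0,0)"
    | (N) "\<forall>a u v b. Oct a u v b \<in> B \<longrightarrow> u = (0,0,0) \<and> v = (0,0,0)" by blast
  then show ?thesis
  proof cases
    case U
    then obtain a0 x v0 b0 where z0: "Oct a0 x v0 b0 \<in> B" "x \<noteq> (0,0,0)" by blast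
    have X: "Oct 0 x (0,0,0) 0 \<in> B" using graded[OF sub e1 z0(1)] by blast
    have c1: "cross3 x u = (0,0,0)" if "Oct a u v b \<in> B" for a u v b
    proof (rule ccontr)
      assume ne: "cross3 x u \<noteq> (0,0,0)"
      have U': "Oct 0 u (0,0,0) 0 \<in> B" using graded[OF sub e1 that] by blast
      have W: "Oct 0 (0,0,0) (cross3 x u) 0 \<in> B" using sa_mult[OF sub X U'] mult_UU by metis
      show False using good_four[OF gd d3 e1 X U' W indep_I2a[OF ne]] .
    qed
    have c2: "dot3 x v = 0" if "Oct a u v b \<in> B" for a u v b
    proof (rule ccontr)
      assume ne: "dot3 x v \<noteq> 0"
      then have vne: "v \<noteq> (0,0,0)" by (cases x) auto
      have V': "Oct 0 (0,0,0) v 0 \<in> B" using graded[OF sub e1 that] by blast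
      have "Oct 0 (0,0,0) (0,0,0) (dot3 v x) \<in> B" using sa_mult[OF sub V' X] mult_VU by metis
      then have "oscale (1 / dot3 x v) (Oct 0 (0,0,0) (0,0,0) (dot3 v x)) \<in> B" using sa_scale[OF sub] by blast
      then have E2: "oe2 \<in> B" using ne by (simp add: oe2_def dot3_comm)
      show False using good_four[OF gd d3 e1 E2 X V' indep_I2b[OF z0(2) vne]] .
    qed
    obtain r1 r2 r3 where r: "dot3 r1 (cross3 r2 r3) = 1" "mv r1 r2 r3 x = (1,0,0)" "cross3 r2 r3 = x"
      using to_U1_rows[OF z0(2)] by blast
    have g: "SM r1 r2 r3 \<in> G2" using SM_G2[OF r(1)] .
    have allP: "\<forall>z\<in>B. inP (SM r1 r2 r3 z)"
    proof
      fix z assume zB: "z \<in> B"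
      obtain a u v b where z: "z = Oct a u v b" by (cases z)
      obtain c where "u = vscale c x" using parallel[OF z0(2) c1[OF zB[unfolded z]]] by blast
      then show "inP (SM r1 r2 r3 z)" unfolding z using SM_vals[OF r(3) r(2)] c2[OF zB[unfolded z]] by blast
    qed
    have gx: "SM r1 r2 r3 (Oct 0 x (0,0,0) 0) = oU1"
      using r(2) by (simp del: mv.simps add: oU1_def) (cases r1; cases r2; cases r3; simp)
    have "oU1 \<noteq> (0::'a oct)" "pos0 (oU1 :: 'a oct)" by (simp_all add: oU1_def oct_zero)
    then show ?thesis using nodegE[OF gd g allP X] gx by simp
  next
    case V
    then obtain a0 u0 y b0 where z0: "Oct a0 u0 y b0 \<in> B" "y \<noteq> (0,0,0)" by blast
    have Y: "Oct 0 (0,0,0) y 0 \<in> B" using graded[OF sub e1 z0(1)] by blast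
    have c1: "cross3 y v = (0,0,0)" if "Oct a u v b \<in> B" for a u v b
    proof -
      have V': "Oct 0 (0,0,0) v 0 \<in> B" using graded[OF sub e1 that] by blast
      have "Oct 0 (vscale (-1) (cross3 v y)) (0,0,0) 0 \<in> B" using sa_mult[OF sub V' Y] mult_VV by metis
      then have "vscale (-1) (cross3 v y) = (0,0,0)" using V(1) by blast
      then show ?thesis using cross3_anti[of v y] by simp
    qed
    obtain r1 r2 r3 where r: "dot3 r1 (cross3 r2 r3) = 1" "mv r1 r2 r3 y = (1,0,0)" "cross3 r2 r3 = y"
      using to_U1_rows[OF z0(2)] by blast
    have g: "SM r1 r2 r3 \<circ> sig \<in> G2" using G2_comp[OF SM_G2[OF r(1)] sig_G2] .
    have allP: "\<forall>z\<in>B. inP ((SM r1 r2 r3 \<circ> sig) z)"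
    proof
      fix z assume zB: "z \<in> B"
      obtain a u v b where z: "z = Oct a u v b" by (cases z)
      have u0: "u = (0,0,0)" using V(1) zB z by blast
      obtain c where vc: "v = vscale c y" using parallel[OF z0(2) c1[OF zB[unfolded z]]] by blast
      have "sig z = Oct b (vscale (-c) y) (0,0,0) a" unfolding z u0 vc by simp
      moreover have "inP (SM r1 r2 r3 (Oct b (vscale (-c) y) (0,0,0) a))"
        using SM_vals[OF r(3) r(2), of "vscale (-c) y" "-c" "(0,0,0)"] by (cases y) simp
      ultimately show "inP ((SM r1 r2 r3 \<circ> sig) z)" by simp
    qed
    have gy: "(SM r1 r2 r3 \<circ> sig) (Oct 0 (0,0,0) y 0) = Oct 0 (-1,0,0) (0,0,0) 0"
    proof -
      have "sig (Oct 0 (0,0,0) y 0) = Oct 0 (vscale (-1) y) (0,0,0) 0" by simp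
      moreover have "mv r1 r2 r3 (vscale (-1) y) = (-1,0,0)" using r(2) mv_scale[of r1 r2 r3 "-1" y] by simp
      ultimately show ?thesis by (simp del: mv.simps vscale.simps) (cases r1; cases r2; cases r3; simp)
    qed
    have "Oct 0 (-1,0,0) (0,0,0) 0 \<noteq> (0::'a oct)" "pos0 (Oct 0 (-1,0,0) (0,0,0) (0::'a))" by (simp_all add: oct_zero)
    then show ?thesis using nodegE[OF gd g allP Y] gy by simp
  next
    case N
    have form: "\<exists>a b. z = Oct a (0,0,0) (0,0,0) b" if "z \<in> B" for z
      using N that by (cases z) blast
    show ?thesis
    proof (cases "\<exists>z\<in>B. \<exists>a b. z = Oct a (0,0,0) (0,0,0) b \<and> b \<noteq> 0")
      case True
      then obtain a b where ab: "Oct a (0,0,0) (0,0,0) b \<in> B" "b \<noteq> 0" by blast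
      have "Oct 0 (0,0,0) (0,0,0) b \<in> B" using graded[OF sub e1 ab(1)] by blast
      then have "oscale (1/b) (Oct 0 (0,0,0) (0,0,0) b) \<in> B" using sa_scale[OF sub] by blast
      then have E2: "oe2 \<in> B" using ab(2) by (simp add: oe2_def)
      have eq: "B = span_list [oe1, oe2]"
      proof
        show "B \<subseteq> span_list [oe1, oe2]"
        proof
          fix z assume "z \<in> B"
          then obtain a b where "z = Oct a (0,0,0) (0,0,0) b" using form by blast
          then have "z = oscale a oe1 + oscale b oe2" by (simp add: oe1_def oe2_def)
          then show "z \<in> span_list [oe1, oe2]" unfolding span_list_2 by blast
        qed
      next
        show "span_list [oe1, oe2] \<subseteq> B"
        proof
          fix z :: "'a oct" assume "z \<in> span_list [oe1, oe2]"
          then obtain c1 c2 where "z = oscale c1 oe1 + oscale c2 oe2" unfolding span_list_2 by blast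
          then show "z \<in> B" using sa_add[OF sub sa_scale[OF sub e1] sa_scale[OF sub E2]] by simp
        qed
      qed
      have "2 \<le> d" using good_bound[OF gd indep_e12] e1 E2 by simp
      moreover have "d \<le> 2" using good_dim_le[OF gd, of "[oe1, oe2]"] eq by simp
      ultimately show ?thesis using eq by simp
    next
      case False
      have eq: "B = span_list [oe1]"
      proof
        show "B \<subseteq> span_list [oe1]"
        proof
          fix z assume zB: "z \<in> B"
          then obtain a b where z: "z = Oct a (0,0,0) (0,0,0) b" using form by blast
          then have "b = 0" using False zB by blast
          then have "z = oscale a oe1" using z by (simp add: oe1_def)
          then show "z \<in> span_list [oe1]" unfolding span_list_1 by blast
        qed
      next
        show "span_list [oe1] \<subseteq> B"
        proof
          fix z :: "'a oct" assume "z \<in> span_list [oe1]"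
          then obtain c1 where "z = oscale c1 oe1" unfolding span_list_1 by blast
          then show "z \<in> B" using sa_scale[OF sub e1] by simp
        qed
      qed
      have "d \<le> 1" using good_dim_le[OF gd, of "[oe1]"] eq by simp
      moreover have "oe1 \<noteq> (0::'a oct)" by (simp add: oe1_def oct_zero)
      then have "lin_indep [oe1 :: 'a oct]"
        unfolding lin_indep_def ozero_is_0 by (auto simp: length_Suc_conv oe1_def oct_zero)
      then have "1 \<le> d" using good_bound[OF gd, of "[oe1]"] e1 by simp
      ultimately show ?thesis using eq by simp
    qed
  qed
qed



lemma char2_two: assumes "CHAR('a::field) = 2" shows "(1::'a) + 1 = 0"
proof -
  have "of_nat CHAR('a) = (0::'a)" by (rule of_nat_CHAR)
  then show ?thesis using assms by simp
qed

lemma char2_dbl: assumes "CHAR('a::field) = 2" shows "(x::'a) + x = 0"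
proof -
  have "x + x = (1 + 1) * x" by (simp add: algebra_simps)
  then show ?thesis using char2_two[OF assms] by simp
qed

lemma char2_neg: assumes "CHAR('a::field) = 2" shows "- (x::'a) = x"
  using char2_dbl[OF assms, of x] by (simp add: add_eq_0_iff eq_neg_iff_add_eq_0)

lemma quad_root: assumes "alg_closed TYPE('a::field)" shows "\<exists>s::'a. s * s + p * s + q = 0"
proof -
  have "1 \<le> degree [:q, p, 1:]" by simp
  then obtain s where "poly [:q, p, 1:] s = 0" using assms unfolding alg_closed_def by blast
  then show ?thesis by (auto simp: algebra_simps)
qed

definition nti :: "'a::field oct set \<Rightarrow> bool" where "nti B \<longleftrightarrow> (\<forall>e\<in>B. \<not> ntidem e)"

lemma nti_image: assumes "nti B" "g \<in> G2" shows "nti (g ` B)"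
  unfolding nti_def
proof
  fix e assume "e \<in> g ` B"
  then obtain z where z: "z \<in> B" "e = g z" by auto
  show "\<not> ntidem e"
  proof
    assume "ntidem e"
    then have "ntidem (inv g e)" using ntidem_G2[OF G2_inv[OF assms(2)]] by blast
    moreover have "inv g e = z" using z G2_inj[OF assms(2)] by simp
    ultimately show False using assms(1) z(1) unfolding nti_def by blast
  qed
qed

lemma dot3_scale_r[simp]: "dot3 u (vscale s v) = s * dot3 u v"
  by (cases u, cases v) (simp add: algebra_simps)

lemma two_ne_one: "(2::'a::field) \<noteq> 1"
  by (metis add_cancel_right_right one_add_one zero_neq_one)

lemma ntidem_of_cond:
  assumes "a + b = 1" "a * b = dot3 u v" shows "ntidem (Oct a u v b)"
proof -
  have "Oct a u v b \<noteq> 0" using assms(1) by (auto simp: oct_zero)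
  moreover have "Oct a u v b \<noteq> oone" using assms(1) two_ne_one by (auto simp: oone_def)
  ultimately show ?thesis unfolding ntidem_def using idem_of_cond[OF assms] by blast
qed

lemma nil_of_cond:
  assumes "a + b = 0" "a * b = dot3 u v" shows "omult (Oct a u v b) (Oct a u v b) = 0"
proof -
  obtain u1 u2 u3 v1 v2 v3 where uv: "u = (u1,u2,u3)" "v = (v1,v2,v3)" by (metis prod_cases3)
  have b: "b = - a" using assms(1) by (metis add_eq_0_iff)
  show ?thesis using assms(2) unfolding uv b by (simp add: oct_zero algebra_simps, (intro conjI)?; algebra)
qed

lemma claimA:
  fixes B :: "'a::field oct set"
  assumes ac: "alg_closed TYPE('a)" and ch: "CHAR('a) = 2"
    and sub: "subalgebra B" and one: "oone \<in> B" and nt: "nti B" and z: "Oct a u v b \<in> B"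
  shows "a + b = 0"
proof (rule ccontr)
  assume t: "a + b \<noteq> 0"
  define n where "n = a * b - dot3 u v"
  obtain s where s: "s * s + (- (a + b)) * s + n = 0" using quad_root[OF ac, of "- (a + b)" n] by blast
  define e where "e = oscale (1 / (a + b)) (Oct a u v b - oscale s oone)"
  have eB: "e \<in> B" unfolding e_def by (intro sa_scale[OF sub] sa_diff[OF sub] z sa_scale[OF sub] one)
  have e: "e = Oct ((a - s) / (a + b)) (vscale (1 / (a + b)) u) (vscale (1 / (a + b)) v) ((b - s) / (a + b))"
    unfolding e_def oone_def by (cases u, cases v) (simp add: field_simps)
  have s2: "s + s = 0" using char2_dbl[OF ch] .
  have c1: "(a - s) / (a + b) + (b - s) / (a + b) = 1"
  proof -
    have "(a - s) + (b - s) = a + b" using s2 by (simp add: algebra_simps)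
    then have "(a - s) / (a + b) + (b - s) / (a + b) = (a + b) / (a + b)" by (simp add: add_divide_distrib[symmetric])
    then show ?thesis using t by simp
  qed
  have c2: "(a - s) / (a + b) * ((b - s) / (a + b)) = dot3 (vscale (1 / (a + b)) u) (vscale (1 / (a + b)) v)"
  proof -
    have h: "(a - s) * (b - s) = dot3 u v" using s unfolding n_def by (simp add: algebra_simps)
    have "(a - s) / (a + b) * ((b - s) / (a + b)) = ((a - s) * (b - s)) / ((a + b) * (a + b))" by simp
    also have "\<dots> = dot3 u v / ((a + b) * (a + b))" using h by simp
    also have "\<dots> = dot3 (vscale (1 / (a + b)) u) (vscale (1 / (a + b)) v)" by simp
    finally show ?thesis .
  qed
  have "ntidem e" unfolding e by (rule ntidem_of_cond[OF c1 c2])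
  then show False using nt eB unfolding nti_def by blast
qed

lemma sq_formula:
  "oscale (a + b) (Oct a u v b) - omult (Oct a u v b) (Oct a u v b) = oscale (a * b - dot3 u v) oone"
  by (cases u, cases v) (simp add: oone_def algebra_simps)

lemma claimB:
  assumes sub: "subalgebra B" and one: "oone \<notin> B" and nt: "nti B" and z: "Oct a u v b \<in> B"
  shows "a + b = 0 \<and> a * b = dot3 u v"
proof -
  have "oscale (a * b - dot3 u v) oone \<in> B"
    using sq_formula[of a b u v] sa_diff[OF sub sa_scale[OF sub z] sa_mult[OF sub z z]] by metis
  then have n: "a * b = dot3 u v"
  proof (rule contrapos_pp)
    assume "a * b \<noteq> dot3 u v"
    then have "a * b - dot3 u v \<noteq> 0" by simp
    then have "oone = oscale (1 / (a * b - dot3 u v)) (oscale (a * b - dot3 u v) oone)" by simp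
    then show "oscale (a * b - dot3 u v) oone \<notin> B" using one sa_scale[OF sub] by metis
  qed
  have t: "a + b = 0"
  proof (rule ccontr)
    assume t: "a + b \<noteq> 0"
    define e where "e = oscale (1 / (a + b)) (Oct a u v b)"
    have eB: "e \<in> B" unfolding e_def by (rule sa_scale[OF sub z])
    have e: "e = Oct (a / (a + b)) (vscale (1 / (a + b)) u) (vscale (1 / (a + b)) v) (b / (a + b))"
      unfolding e_def by simp
    have c1: "a / (a + b) + b / (a + b) = 1" using t by (simp add: add_divide_distrib[symmetric])
    have "a / (a + b) * (b / (a + b)) = (a * b) / ((a + b) * (a + b))" by simp
    also have "\<dots> = dot3 (vscale (1 / (a + b)) u) (vscale (1 / (a + b)) v)" using n by simp
    finally have c2: "a / (a + b) * (b / (a + b)) = dot3 (vscale (1 / (a + b)) u) (vscale (1 / (a + b)) v)" .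
    have "ntidem e" unfolding e by (rule ntidem_of_cond[OF c1 c2])
    then show False using nt eB unfolding nti_def by blast
  qed
  show ?thesis using t n by simp
qed



definition oU2 :: "'a::field oct" where "oU2 = Oct 0 (0,1,0) (0,0,0) 0"
definition oV2 :: "'a::field oct" where "oV2 = Oct 0 (0,0,0) (0,1,0) 0"
definition oV3 :: "'a::field oct" where "oV3 = Oct 0 (0,0,0) (0,0,1) 0"

lemma span_UVV:
  assumes gd: "good C d" "d \<le> 3" and m: "oU1 \<in> C" "oV2 \<in> C" "oV3 \<in> C" and w: "w \<in> C"
  shows "inP w"
proof -
  have sub: "subalgebra C" using gd good_sub by blast
  obtain a u1 u2 u3 v1 v2 v3 b where wd: "w = Oct a (u1,u2,u3) (v1,v2,v3) b" by (rule oct8_cases)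
  define r where "r = w - oscale u1 oU1 - oscale v2 oV2 - oscale v3 oV3"
  have rB: "r \<in> C" unfolding r_def using sa_diff[OF sub] sa_scale[OF sub] m w by metis
  have r: "r = Oct a (0,u2,u3) (v1,0,0) b" unfolding r_def wd by (simp add: oU1_def oV2_def oV3_def)
  have "r = 0"
  proof (rule ccontr)
    assume rn: "r \<noteq> 0"
    have "lin_indep [oU1, oV2, oV3, r]"
    proof (rule indep4I)
      fix c1 c2 c3 c4 :: 'a
      assume "oscale c1 oU1 + oscale c2 oV2 + oscale c3 oV3 + oscale c4 r = 0"
      then have e: "c1 = 0" "c2 = 0" "c3 = 0" "c4 * a = 0" "c4 * u2 = 0" "c4 * u3 = 0" "c4 * v1 = 0" "c4 * b = 0"
        unfolding r by (simp_all add: oU1_def oV2_def oV3_def oct_zero)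
      have "c4 = 0" using rn e(4-8) unfolding r by (auto simp: oct_zero)
      then show "c1 = 0 \<and> c2 = 0 \<and> c3 = 0 \<and> c4 = 0" using e by simp
    qed
    then show False using good_four[OF gd m rB] by blast
  qed
  then show ?thesis using r wd by (simp add: oct_zero)
qed

lemma span_UUV:
  assumes gd: "good C d" "d \<le> 3" and m: "oU1 \<in> C" "oU2 \<in> C" "oV3 \<in> C" and w: "w \<in> C"
  shows "inP2 w"
proof -
  have sub: "subalgebra C" using gd good_sub by blast
  obtain a u1 u2 u3 v1 v2 v3 b where wd: "w = Oct a (u1,u2,u3) (v1,v2,v3) b" by (rule oct8_cases)
  define r where "r = w - oscale u1 oU1 - oscale u2 oU2 - oscale v3 oV3"
  have rB: "r \<in> C" unfolding r_def using sa_diff[OF sub] sa_scale[OF sub] m w by metis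
  have r: "r = Oct a (0,0,u3) (v1,v2,0) b" unfolding r_def wd by (simp add: oU1_def oU2_def oV3_def)
  have "r = 0"
  proof (rule ccontr)
    assume rn: "r \<noteq> 0"
    have "lin_indep [oU1, oU2, oV3, r]"
    proof (rule indep4I)
      fix c1 c2 c3 c4 :: 'a
      assume "oscale c1 oU1 + oscale c2 oU2 + oscale c3 oV3 + oscale c4 r = 0"
      then have e: "c1 = 0" "c2 = 0" "c3 = 0" "c4 * a = 0" "c4 * u3 = 0" "c4 * v1 = 0" "c4 * v2 = 0" "c4 * b = 0"
        unfolding r by (simp_all add: oU1_def oU2_def oV3_def oct_zero)
      have "c4 = 0" using rn e(4-8) unfolding r by (auto simp: oct_zero)
      then show "c1 = 0 \<and> c2 = 0 \<and> c3 = 0 \<and> c4 = 0" using e by simp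
    qed
    then show False using good_four[OF gd m rB] by blast
  qed
  then show ?thesis using r wd by (simp add: oct_zero)
qed

lemma G2_image_one: "g \<in> G2 \<Longrightarrow> oone \<in> B \<Longrightarrow> oone \<in> g ` B"
  using G2_one by (metis imageI)
lemma G2_image_notone: "g \<in> G2 \<Longrightarrow> oone \<notin> B \<Longrightarrow> oone \<notin> g ` B"
  using G2_one G2_inj by (metis imageE injD)

lemma indep_IIa:
  assumes "(u2,u3) \<noteq> (0,0)"
  shows "lin_indep [oone, oU1, Oct 0 (0,u2,u3) (0,v2,v3) 0, Oct 0 (0,0,0) (0,-u3,u2) (0::'a::field)]"
proof (rule indep4I)
  fix c1 c2 c3 c4 :: 'a
  assume "oscale c1 oone + oscale c2 oU1 + oscale c3 (Oct 0 (0,u2,u3) (0,v2,v3) 0) + oscale c4 (Oct 0 (0,0,0) (0,-u3,u2) 0) = 0"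
  then have e: "c1 = 0" "c2 = 0" "c3 * u2 = 0" "c3 * u3 = 0" "c3 * v2 - c4 * u3 = 0" "c3 * v3 + c4 * u2 = 0"
    by (simp_all add: oone_def oU1_def oct_zero)
  have "c3 = 0" using e(3,4) assms by auto
  then have "c4 * u3 = 0" "c4 * u2 = 0" using e(5,6) by simp_all
  then have "c4 = 0" using assms by auto
  then show "c1 = 0 \<and> c2 = 0 \<and> c3 = 0 \<and> c4 = 0" using e \<open>c3 = 0\<close> by simp
qed

lemma caseIIa:
  fixes B :: "'a::field oct set"
  assumes ac: "alg_closed TYPE('a)" and ch: "CHAR('a) = 2"
    and gd: "good B d" and d3: "d \<le> 3" and d2: "2 \<le> d" and one: "oone \<in> B" and nt: "nti B"
  shows False
proof -
  have sub: "subalgebra B" using gd good_sub by blast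
  obtain z where zB: "z \<in> B" and zn: "z \<notin> span_list [oone]"
  proof (rule ccontr)
    assume "\<not> thesis"
    then have "B \<subseteq> span_list [oone]" using that by blast
    then have "d \<le> 1" using good_dim_le[OF gd, of "[oone]"] by simp
    then show False using d2 by simp
  qed
  obtain a u v b where z: "z = Oct a u v b" by (cases z)
  have t: "a + b = 0" using claimA[OF ac ch sub one nt] zB z by blast
  obtain r where r: "r * r + 0 * r + (- (a * b - dot3 u v)) = 0" using quad_root[OF ac] by blast
  define y where "y = z - oscale r oone"
  have yB: "y \<in> B" unfolding y_def by (rule sa_diff[OF sub zB sa_scale[OF sub one]])
  have yd: "y = Oct (a - r) u v (b - r)" unfolding y_def z oone_def by (cases u, cases v) simp
  have c1: "(a - r) + (b - r) = 0"
    using t char2_dbl[OF ch, of r] by (simp add: algebra_simps)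
  have c2: "(a - r) * (b - r) = dot3 u v"
  proof -
    have "(a - r) * (b - r) = a * b - r * (a + b) + r * r" by (simp add: algebra_simps)
    also have "\<dots> = (a * b + a * b) - dot3 u v" using t r by (simp add: algebra_simps)
    also have "\<dots> = - dot3 u v" using char2_dbl[OF ch, of "a * b"] by simp
    also have "\<dots> = dot3 u v" using char2_neg[OF ch] by simp
    finally show ?thesis .
  qed
  have ysq: "omult y y = 0" unfolding yd by (rule nil_of_cond[OF c1 c2])
  have yn: "y \<noteq> 0"
  proof
    assume "y = 0"
    then have "z = oscale r oone" unfolding y_def by simp
    then show False using zn unfolding span_list_1 by blast
  qed
  obtain g where g: "g \<in> G2" "g y = oU1" using T_nil[OF ysq yn] by blast
  define B2 where "B2 = g ` B"
  have gd2: "good B2 d" unfolding B2_def by (rule good_image[OF gd g(1)])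
  have sub2: "subalgebra B2" using gd2 good_sub by blast
  have one2: "oone \<in> B2" unfolding B2_def by (rule G2_image_one[OF g(1) one])
  have nt2: "nti B2" unfolding B2_def by (rule nti_image[OF nt g(1)])
  have U1: "oU1 \<in> B2" unfolding B2_def using yB g(2) by (metis imageI)
  have allP: "\<forall>w\<in>B2. inP w"
  proof
    fix w assume wB: "w \<in> B2"
    obtain a u1 u2 u3 v1 v2 v3 b where wd: "w = Oct a (u1,u2,u3) (v1,v2,v3) b" by (rule oct8_cases)
    have ta: "a + b = 0" using claimA[OF ac ch sub2 one2 nt2] wB wd by blast
    have "omult oU1 w = Oct v1 (b,0,0) (0,-u3,u2) 0" unfolding wd oU1_def by simp
    then have "Oct v1 (b,0,0) (0,-u3,u2) 0 \<in> B2" using sa_mult[OF sub2 U1 wB] by metis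
    then have v1: "v1 = 0" using claimA[OF ac ch sub2 one2 nt2] by fastforce
    have ba: "b - a = 0" using ta char2_neg[OF ch, of a] by (metis add_eq_0_iff diff_self)
    define z2 where "z2 = w - oscale a oone - oscale u1 oU1"
    have z2B: "z2 \<in> B2" unfolding z2_def using sa_diff[OF sub2] sa_scale[OF sub2] wB one2 U1 by metis
    have z2: "z2 = Oct 0 (0,u2,u3) (0,v2,v3) 0" unfolding z2_def wd using v1 ba by (simp add: oone_def oU1_def)
    have "omult oU1 z2 = Oct 0 (0,0,0) (0,-u3,u2) 0" unfolding z2 oU1_def by simp
    then have p2B: "Oct 0 (0,0,0) (0,-u3,u2) 0 \<in> B2" using sa_mult[OF sub2 U1 z2B] by metis
    have "(u2, u3) = (0,0)"
    proof (rule ccontr)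
      assume "(u2, u3) \<noteq> (0,0)"
      from good_four[OF gd2 d3 one2 U1 z2B[unfolded z2] p2B indep_IIa[OF this]] show False .
    qed
    then show "inP w" using wd v1 by simp
  qed
  have "oU1 \<noteq> (0::'a oct)" "pos0 (oU1 :: 'a oct)" by (simp_all add: oU1_def oct_zero)
  then show False using good_P[OF gd2 allP U1] by blast
qed

lemma span_nil: "span_list [] = {0}"
  unfolding span_list_def by auto

lemma indep_IIb:
  assumes "(u2,u3) \<noteq> (0,0)"
  shows "lin_indep [oU1, Oct a (0,u2,u3) (0,v2,v3) b, Oct 0 (b,0,0) (0,-u3,u2) (0::'a::field)]"
proof (rule indep3I)
  fix c1 c2 c3 :: 'a
  assume "oscale c1 oU1 + oscale c2 (Oct a (0,u2,u3) (0,v2,v3) b) + oscale c3 (Oct 0 (b,0,0) (0,-u3,u2) 0) = 0"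
  then have e: "c1 + c3 * b = 0" "c2 * u2 = 0" "c2 * u3 = 0" "c2 * v2 - c3 * u3 = 0" "c2 * v3 + c3 * u2 = 0"
    by (simp_all add: oU1_def oct_zero)
  have "c2 = 0" using e(2,3) assms by auto
  then have "c3 * u3 = 0" "c3 * u2 = 0" using e(4,5) by simp_all
  then have "c3 = 0" using assms by auto
  then show "c1 = 0 \<and> c2 = 0 \<and> c3 = 0" using e \<open>c2 = 0\<close> by simp
qed

lemma caseIIb:
  fixes B :: "'a::field oct set"
  assumes ch: "CHAR('a) = 2"
    and gd: "good B d" and d3: "d \<le> 3" and d1: "1 \<le> d" and one: "oone \<notin> B" and nt: "nti B"
  shows False
proof -
  have sub: "subalgebra B" using gd good_sub by blast
  obtain y where yB: "y \<in> B" and yn: "y \<noteq> 0"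
  proof (rule ccontr)
    assume "\<not> thesis"
    then have "B \<subseteq> span_list []" using that span_nil by blast
    then have "d \<le> 0" using good_dim_le[OF gd, of "[]"] by simp
    then show False using d1 by simp
  qed
  obtain a u v b where y: "y = Oct a u v b" by (cases y)
  have ysq: "omult y y = 0" unfolding y using claimB[OF sub one nt yB[unfolded y]] nil_of_cond by blast
  obtain g where g: "g \<in> G2" "g y = oU1" using T_nil[OF ysq yn] by blast
  define B2 where "B2 = g ` B"
  have gd2: "good B2 d" unfolding B2_def by (rule good_image[OF gd g(1)])
  have sub2: "subalgebra B2" using gd2 good_sub by blast
  have one2: "oone \<notin> B2" unfolding B2_def by (rule G2_image_notone[OF g(1) one])
  have nt2: "nti B2" unfolding B2_def by (rule nti_image[OF nt g(1)])
  have U1: "oU1 \<in> B2" unfolding B2_def using yB g(2) by (metis imageI)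
  have v1z: "v1 = 0" if "Oct a (u1,u2,u3) (v1,v2,v3) b \<in> B2" for a u1 u2 u3 v1 v2 v3 b
  proof -
    have "Oct a (u1,u2,u3) (v1,v2,v3) b + oU1 \<in> B2" using sa_add[OF sub2 that U1] .
    then have "Oct a (u1 + 1,u2,u3) (v1,v2,v3) b \<in> B2" by (simp add: oU1_def)
    from claimB[OF sub2 one2 nt2 this] claimB[OF sub2 one2 nt2 that] show ?thesis by (simp add: algebra_simps)
  qed
  have U1n: "oU1 \<noteq> (0::'a oct)" "pos0 (oU1 :: 'a oct)" by (simp_all add: oU1_def oct_zero)
  show False
  proof (cases "\<forall>w\<in>B2. inP w")
    case True then show False using good_P[OF gd2 True U1 U1n] by blast
  next
    case False
    then obtain w where wB: "w \<in> B2" and nw: "\<not> inP w" by blast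
    obtain a u1 u2 u3 v1 v2 v3 b where wd: "w = Oct a (u1,u2,u3) (v1,v2,v3) b" by (rule oct8_cases)
    have v1: "v1 = 0" using v1z wB wd by blast
    have uu: "(u2,u3) \<noteq> (0,0)" using nw wd v1 by simp
    define z1 where "z1 = w - oscale u1 oU1"
    have z1B: "z1 \<in> B2" unfolding z1_def using sa_diff[OF sub2 wB sa_scale[OF sub2 U1]] .
    have z1: "z1 = Oct a (0,u2,u3) (0,v2,v3) b" unfolding z1_def wd using v1 by (simp add: oU1_def)
    have "omult oU1 z1 = Oct 0 (b,0,0) (0,-u3,u2) 0" unfolding z1 oU1_def by simp
    then have pB: "Oct 0 (b,0,0) (0,-u3,u2) 0 \<in> B2" using sa_mult[OF sub2 U1 z1B] by metis
    have "3 \<le> d" using good_bound[OF gd2 indep_IIb[OF uu, of a v2 v3 b]] U1 z1B[unfolded z1] pB by simp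
    obtain al be where ab: "al * u2 + be * u3 = 1"
    proof (cases "u2 = 0")
      case True then have "u3 \<noteq> 0" using uu by simp
      then show ?thesis using that[of 0 "1/u3"] by simp
    next
      case False then show ?thesis using that[of "1/u2" 0] by simp
    qed
    define g2 where "g2 = SM (1,0,0) (0,al,be) (0,-u3,u2)"
    have g2G: "g2 \<in> G2" unfolding g2_def by (rule SM_G2) (use ab in \<open>simp add: algebra_simps\<close>)
    define B3 where "B3 = g2 ` B2"
    have gd3: "good B3 d" unfolding B3_def by (rule good_image[OF gd2 g2G])
    have sub3: "subalgebra B3" using gd3 good_sub by blast
    have one3: "oone \<notin> B3" unfolding B3_def by (rule G2_image_notone[OF g2G one2])
    have nt3: "nti B3" unfolding B3_def by (rule nti_image[OF nt2 g2G])
    have "g2 oU1 = oU1" unfolding g2_def oU1_def by simp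
    then have U1': "oU1 \<in> B3" unfolding B3_def using U1 by (metis imageI)
    define v2' where "v2' = u2 * v2 + u3 * v3"
    define v3' where "v3' = al * v3 - be * v2"
    have q1d: "g2 z1 = Oct a (0,1,0) (0,v2',v3') b"
      unfolding g2_def z1 v2'_def v3'_def using ab by (simp add: algebra_simps)
    have q1B: "Oct a (0,1,0) (0,v2',v3') b \<in> B3" unfolding B3_def using z1B q1d by (metis imageI)
    have cq: "a + b = 0" "a * b = v2'" using claimB[OF sub3 one3 nt3 q1B] by simp_all
    have "omult oU1 (Oct a (0,1,0) (0,v2',v3') b) = Oct 0 (b,0,0) (0,0,1) 0" unfolding oU1_def by simp
    then have "Oct 0 (b,0,0) (0,0,1) 0 \<in> B3" using sa_mult[OF sub3 U1' q1B] by metis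
    then have "Oct 0 (b,0,0) (0,0,1) 0 - oscale b oU1 \<in> B3" using sa_diff[OF sub3 _ sa_scale[OF sub3 U1']] by blast
    then have V3: "oV3 \<in> B3" by (simp add: oU1_def oV3_def)
    have "Oct a (0,1,0) (0,v2',v3') b - oscale v3' oV3 \<in> B3" using sa_diff[OF sub3 q1B sa_scale[OF sub3 V3]] .
    then have qB: "Oct a (0,1,0) (0,v2',0) b \<in> B3" by (simp add: oV3_def)
    show False
    proof (cases "a = 0")
      case True
      then have "b = 0" "v2' = 0" using cq by simp_all
      then have U2: "oU2 \<in> B3" using qB True by (simp add: oU2_def)
      have "\<forall>w\<in>B3. inP2 w" using span_UUV[OF gd3 d3 U1' U2 V3] by blast
      then show False using good_P2[OF gd3 _ U1' U1n] by blast
    next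
      case False
      have b: "b = a" using cq(1) char2_neg[OF ch, of a] by (metis add_eq_0_iff)
      have v2: "v2' = a * a" using cq(2) b by simp
      define g3 where "g3 = Xw (0, -1/a, 0)"
      define B4 where "B4 = g3 ` B3"
      have g3G: "g3 \<in> G2" unfolding g3_def by (rule Xw_G2)
      have gd4: "good B4 d" unfolding B4_def by (rule good_image[OF gd3 g3G])
      have sub4: "subalgebra B4" using gd4 good_sub by blast
      have i1: "g3 oU1 \<in> B4" "g3 oV3 \<in> B4" "g3 (Oct a (0,1,0) (0,v2',0) b) \<in> B4"
        unfolding B4_def using U1' V3 qB by (metis imageI)+
      have e1: "g3 oU1 = Oct 0 (1,0,0) (0,0,1/a) 0" unfolding g3_def oU1_def by simp
      have e2: "g3 oV3 = oV3" unfolding g3_def oV3_def by simp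
      have e3: "g3 (Oct a (0,1,0) (0,v2',0) b) = Oct 0 (0,0,0) (0,a*a,0) 0"
        unfolding g3_def b v2 using False char2_dbl[OF ch, of a] by (simp add: field_simps)
      have "Oct 0 (1,0,0) (0,0,1/a) 0 - oscale (1/a) oV3 \<in> B4"
        using sa_diff[OF sub4 i1(1)[unfolded e1] sa_scale[OF sub4 i1(2)[unfolded e2]]] .
      then have U1'': "oU1 \<in> B4" by (simp add: oU1_def oV3_def)
      have "oscale (1/(a*a)) (Oct 0 (0,0,0) (0,a*a,0) 0) \<in> B4" using sa_scale[OF sub4 i1(3)[unfolded e3]] .
      then have V2: "oV2 \<in> B4" using False by (simp add: oV2_def)
      have V3': "oV3 \<in> B4" using i1(2) e2 by simp
      have "\<forall>w\<in>B4. inP w" using span_UVV[OF gd4 d3 U1'' V2 V3'] by blast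
      then show False using good_P[OF gd4 _ U1'' U1n] by blast
    qed
  qed
qed



lemma span_one_eq:
  assumes "oone \<in> span_list [a1 :: 'a::field oct]"
  shows "span_list [a1] = span_list [oone]"
proof -
  obtain c where c: "oone = oscale c a1" using assms unfolding span_list_1 by blast
  have cn: "c \<noteq> 0" using c by (auto simp: oone_def oct_zero)
  have "oscale (1/c) oone = a1" unfolding c using cn by simp
  then have a1: "a1 = oscale (1/c) oone" by simp
  show ?thesis
  proof
    show "span_list [a1] \<subseteq> span_list [oone]"
    proof
      fix x assume "x \<in> span_list [a1]"
      then obtain k where "x = oscale k a1" unfolding span_list_1 by blast
      then have "x = oscale (k * (1/c)) oone" unfolding a1 by simp
      then show "x \<in> span_list [oone]" unfolding span_list_1 by blast
    qed
  next
    show "span_list [oone] \<subseteq> span_list [a1]"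
    proof
      fix x :: "'a oct" assume "x \<in> span_list [oone]"
      then obtain k where "x = oscale k oone" unfolding span_list_1 by blast
      then have "x = oscale (k * c) a1" unfolding c by simp
      then show "x \<in> span_list [a1]" unfolding span_list_1 by blast
    qed
  qed
qed

lemma core:
  fixes B :: "'a::field oct set"
  assumes ac: "alg_closed TYPE('a)" and ch: "CHAR('a) = 2"
    and sub: "subalgebra B" and bas: "is_basis as B"
    and zc: "zariski_closed d (G2_orbit_tuple as)" and d1: "1 \<le> d" and d3: "d \<le> 3"
  shows "\<exists>g\<in>G2. (d = 1 \<and> (g ` B = span_list [oone] \<or> g ` B = span_list [oe1]))
                 \<or> (d = 2 \<and> g ` B = span_list [oe1, oe2])"
proof -
  have li: "lin_indep as" and Bs: "B = span_list as" using bas unfolding is_basis_def by auto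
  have "as \<in> G2_orbit_tuple as" unfolding G2_orbit_tuple_def using G2_id by force
  then have len: "length as = d" using zc unfolding zariski_closed_def by auto
  have inf: "infinite (UNIV :: 'a set)" using alg_closed_infinite[OF ac] .
  have nd: "nodeg B" unfolding nodeg_def Bs
    using deg_main[OF zc li inf] deg_main2[OF zc li inf] by blast
  have gd: "good B d" unfolding good_def using sub Bs li len nd by blast
  show ?thesis
  proof (cases "\<exists>e\<in>B. ntidem e")
    case True
    then obtain e where e: "e \<in> B" "ntidem e" by blast
    obtain g where g: "g \<in> G2" "g e = oe1" using T_idem[OF e(2)] by blast
    have "good (g ` B) d" by (rule good_image[OF gd g(1)])
    moreover have "oe1 \<in> g ` B" using e(1) g(2) by (metis imageI)
    ultimately have "(d = 1 \<and> g ` B = span_list [oe1]) \<or> (d = 2 \<and> g ` B = span_list [oe1, oe2])"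
      using caseI d3 by blast
    then show ?thesis using g(1) by blast
  next
    case False
    then have nt: "nti B" unfolding nti_def by blast
    show ?thesis
    proof (cases "oone \<in> B")
      case True
      show ?thesis
      proof (cases "d = 1")
        case d: True
        then obtain a1 where "as = [a1]" using len by (auto simp: length_Suc_conv)
        then have "B = span_list [oone]" using Bs True span_one_eq by metis
        then have "id ` B = span_list [oone]" by simp
        then show ?thesis using d G2_id by blast
      next
        case False
        then have "2 \<le> d" using d1 by simp
        then show ?thesis using caseIIa[OF ac ch gd d3 _ True nt] by blast
      qed
    next
      case False
      then show ?thesis using caseIIb[OF ch gd d3 d1 False nt] by blast
    qed
  qed
qed

theorem corollary7p10:
  fixes A :: "'a::field oct set" and d :: nat
  assumes "alg_closed TYPE('a)"
    and "CHAR('a) = 2"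
    and "subalgebra A"
    and "has_dim A d"
    and "1 \<le> d" and "d \<le> 3"
    and "\<exists>h\<in>G2. \<exists>as. is_basis as (h ` A) \<and> zariski_closed d (G2_orbit_tuple as)"
  shows "\<exists>g\<in>G2. (d = 1 \<and> (g ` A = span_list [oone] \<or> g ` A = span_list [oe1]))
                 \<or> (d = 2 \<and> g ` A = span_list [oe1, oe2])"
proof -
  obtain h as where h: "h \<in> G2" "is_basis as (h ` A)" "zariski_closed d (G2_orbit_tuple as)"
    using assms(7) by blast
  have sub: "subalgebra (h ` A)" using subalg_image[OF h(1) assms(3)] .
  obtain g where g: "g \<in> G2" "(d = 1 \<and> (g ` (h ` A) = span_list [oone] \<or> g ` (h ` A) = span_list [oe1]))
                 \<or> (d = 2 \<and> g ` (h ` A) = span_list [oe1, oe2])"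
    using core[OF assms(1,2) sub h(2,3) assms(5,6)] by blast
  have "g \<circ> h \<in> G2" using G2_comp[OF g(1) h(1)] .
  moreover have "(g \<circ> h) ` A = g ` (h ` A)" by (simp add: image_comp)
  ultimately show ?thesis using g(2) by metis
qed


end
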